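(* Let $d\ge 1$ and let $\mathbf{p}=(p_1,\dots,p_d)$ be a vector of nonzero real numbers. Then the collection $\mathcal{T}_d(\mathbf{p})$ of $d$-simplices in $\mathbb{R}^d$ constructed below is a simplicial tessellation of $\mathbb{R}^d$, so that $\mathbf{p}\mapsto\mathcal{T}_d(\mathbf{p})$ is a $d$-parametric family of simplicial tessellations. Every simplex $K\in\mathcal{T}_d(\mathbf{p})$ satisfies $$\operatorname{meas}_d K=\prod_{i=1}^d |p_i|.$$ Moreover, every connected compact subset of the tessellation (i.e. every finite subcollection of simplices of $\mathcal{T}_d(\mathbf{p})$ whose union is connected) is a face-to-face mesh.
   Context: Construction. Fix nonzero reals $p_1,\dots,p_d$. Inductively, for $m=1,\dots,d$, we define a collection $\mathcal{T}_m$ of $m$-simplices in $\mathbb{R}^m$ together with a coloring $c_m$ of their vertices by colors in $\{0,\dots,m\}$. (i) $m=1$: the vertices are $A_z=zp_1$, $z\in\mathbb{Z}$; the simplices are the segments between $zp_1$ and $(z+1)p_1$; the coloring is $c_1(A_z)=z \bmod 2$. (ii) Step $m-1\to m$ ($2\le m\le d$): put $c'=c_{m-1}$. For each $K\in\mathcal{T}_{m-1}$ label its vertices $A_0,\dots,A_{m-1}\in\mathbb{R}^{m-1}$ so that $c'(A_i)=i$. For $j\in\mathbb{Z}$ let $B^K_j=(A_{j \bmod m},\, jp_m)\in\mathbb{R}^m$ and for $z\in\mathbb{Z}$ let $L^{K,z}=\operatorname{conv}\{B^K_z,B^K_{z+1},\dots,B^K_{z+m}\}$ (convex hull of $m+1$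 consecutive points). Set $\mathcal{T}_m=\{L^{K,z}: K\in\mathcal{T}_{m-1},\ z\in\mathbb{Z}\}$. The vertices of $\mathcal{T}_m$ are the points $(A,jp_m)$ with $A$ a vertex of $\mathcal{T}_{m-1}$ and $j\equiv c'(A) \pmod m$, and they are colored by $c_m((A,jp_m))=j \bmod (m+1)$. Finally $\mathcal{T}_d(\mathbf{p}):=\mathcal{T}_d$. A simplicial tessellation of $\mathbb{R}^d$ is a collection of $d$-simplices covering $\mathbb{R}^d$ with pairwise disjoint interiors. A collection of simplices is a face-to-face mesh if any two of its simplices intersect either in the empty set or in a common face of both. $\operatorname{meas}_d$ denotes $d$-dimensional Lebesgue measure. *)

theory Defs
  imports "HOL-Analysis.Analysis"
begin

text \<open>A simplex of T_m is represented by the list of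
its m+1 vertices ordered by colour (entry i has colour i); a point of R^m is a
real list of length m.  The parameters are p 1, ..., p d.\<close>

fun tess_vertices :: "(nat \<Rightarrow> real) \<Rightarrow> nat \<Rightarrow> real list list set" where
  "tess_vertices p 0 = {}"
| "tess_vertices p (Suc 0) =
     (\<lambda>z::int. if z mod 2 = 0
               then [[of_int z * p 1], [of_int (z + 1) * p 1]]
               else [[of_int (z + 1) * p 1], [of_int z * p 1]]) ` UNIV"
| "tess_vertices p (Suc (Suc m)) =
     (\<lambda>(A, z::int).
        map (\<lambda>i. let j = z + ((int i - z) mod int (m + 3))
                 in A ! nat (j mod int (m + 2)) @ [of_int j * p (m + 2)])
            [0..<m + 3])
     ` (tess_vertices p (Suc m) \<times> UNIV)"

text \<open>Identification of real lists of length CARD('d) with vectors in real^'d,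
using the (arbitrary) linear order on the index type to order coordinates.\<close>

definition vec_of_list :: "real list \<Rightarrow> real ^ ('d::{finite,linorder})" where
  "vec_of_list xs = (\<chi> i. xs ! card {j. j < i})"

definition tess :: "(nat \<Rightarrow> real) \<Rightarrow> (real ^ ('d::{finite,linorder})) set set" where
  "tess p = (\<lambda>A. convex hull (set (map vec_of_list A))) ` tess_vertices p CARD('d)"

definition simplicial_tessellation :: "('a::euclidean_space) set set \<Rightarrow> bool" where
  "simplicial_tessellation T \<longleftrightarrow>
     (\<forall>K\<in>T. int DIM('a) simplex K) \<and> \<Union>T = UNIV \<and>
     (\<forall>K\<in>T. \<forall>K'\<in>T. K \<noteq> K' \<longrightarrow> interior K \<inter> interior K' = {})"

definition face_to_face_mesh :: "('a::euclidean_space) set set \<Rightarrow> bool" where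
  "face_to_face_mesh T \<longleftrightarrow>
     (\<forall>K\<in>T. \<forall>K'\<in>T. K \<inter> K' = {} \<or> (K \<inter> K' face_of K \<and> K \<inter> K' face_of K'))"

end

theory Submission
  imports Defs
begin

definition ix :: "'n::{finite,linorder} \<Rightarrow> nat" where "ix i = card {j. j < i}"

lemma ix_less: "ix (i::'n::{finite,linorder}) < CARD('n)"
  unfolding ix_def by (rule psubset_card_mono) auto

lemma ix_mono: "(i::'n::{finite,linorder}) < j \<Longrightarrow> ix i < ix j"
  unfolding ix_def by (rule psubset_card_mono) auto

lemma ix_inj: "ix (i::'n::{finite,linorder}) = ix j \<longleftrightarrow> i = j"
  by (metis ix_mono less_irrefl neqE)

lemma ix_le: "ix (i::'n::{finite,linorder}) \<le> ix j \<longleftrightarrow> i \<le> j"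
  by (metis ix_mono leD le_less linorder_le_less_linear)

lemma ix_lt: "ix (i::'n::{finite,linorder}) < ix j \<longleftrightarrow> i < j"
  by (metis ix_le not_le)

lemma ix_bij: "bij_betw (ix::'n::{finite,linorder} \<Rightarrow> nat) UNIV {..<CARD('n)}"
proof -
  have "inj (ix::'n \<Rightarrow> nat)" by (simp add: inj_def ix_inj)
  moreover have "ix ` (UNIV::'n set) \<subseteq> {..<CARD('n)}" using ix_less by auto
  moreover have "card (ix ` (UNIV::'n set)) = card {..<CARD('n)}"
    using card_image[OF \<open>inj ix\<close>] by simp
  ultimately show ?thesis
    by (simp add: bij_betw_def card_subset_eq)
qed

lemma ix_surj: "k < CARD('n::{finite,linorder}) \<Longrightarrow> \<exists>i::'n. ix i = k"
  using ix_bij unfolding bij_betw_def by (metis imageE lessThan_iff)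

definition ev :: "nat \<Rightarrow> (real, 'n::{finite,linorder}) vec" where
  "ev k = (\<chi> i. if ix i = k then 1 else 0)"

definition emb :: "real list \<Rightarrow> (real, 'n::{finite,linorder}) vec" where
  "emb xs = (\<chi> i. if ix i < length xs then xs ! ix i else 0)"

definition EE :: "nat \<Rightarrow> ((real, 'n::{finite,linorder}) vec) set" where
  "EE m = {x. \<forall>i. m \<le> ix i \<longrightarrow> x $ i = 0}"

definition prj :: "nat \<Rightarrow> (real, 'n::{finite,linorder}) vec \<Rightarrow> (real, 'n) vec" where
  "prj m x = (\<chi> i. if ix i < m then x $ i else 0)"

definition crd :: "nat \<Rightarrow> (real, 'n::{finite,linorder}) vec \<Rightarrow> real" where
  "crd m x = x \<bullet> ev m"

lemma crd_eq: "ix (i::'n::{finite,linorder}) = m \<Longrightarrow> crd m (x::(real,'n) vec) = x $ i"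
proof -
  assume a: "ix i = m"
  have "crd m x = (\<Sum>k\<in>UNIV. x $ k * (if ix k = m then 1 else 0))"
    by (simp add: crd_def inner_vec_def ev_def)
  also have "\<dots> = (\<Sum>k\<in>{i}. x $ k)"
    by (rule sum.mono_neutral_cong_right) (auto simp: a[symmetric] ix_inj)
  finally show ?thesis by simp
qed

lemma emb_snoc: "length xs < CARD('n) \<Longrightarrow>
   (emb (xs @ [r]) :: (real, 'n::{finite,linorder}) vec) = emb xs + r *\<^sub>R ev (length xs)"
  by (auto simp: vec_eq_iff emb_def ev_def nth_append)

lemma emb_vec: "length xs = CARD('n) \<Longrightarrow> (emb xs :: (real, 'n::{finite,linorder}) vec) = vec_of_list xs"
  using ix_less by (auto simp: vec_eq_iff emb_def vec_of_list_def ix_def[symmetric])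

lemma emb_EE: "length xs \<le> m \<Longrightarrow> emb xs \<in> EE m"
  by (auto simp: emb_def EE_def)

lemma linear_prj: "linear (prj m)"
  by (auto simp: linear_iff vec_eq_iff prj_def)

lemma linear_crd: "linear (crd m)"
  by (auto simp: linear_iff crd_def inner_add_left)

lemma prj_EE: "x \<in> EE m \<Longrightarrow> prj m x = x"
  by (auto simp: EE_def prj_def vec_eq_iff)

lemma prj_ev: "prj m (ev m) = 0"
  by (auto simp: prj_def ev_def vec_eq_iff)

lemma crd_ev: "m < CARD('n::{finite,linorder}) \<Longrightarrow> crd m (ev m :: (real,'n) vec) = 1"
proof -
  assume "m < CARD('n)"
  then obtain i :: 'n where "ix i = m" using ix_surj by blast
  then show ?thesis using crd_eq[of i m] by (simp add: ev_def)
qed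

lemma crd_EE: "x \<in> EE m \<Longrightarrow> crd m x = 0"
  by (auto simp: EE_def crd_def inner_vec_def ev_def intro!: sum.neutral)

lemma EE_decomp: "m < CARD('n::{finite,linorder}) \<Longrightarrow> (x::(real,'n) vec) \<in> EE (Suc m) \<Longrightarrow>
   x = prj m x + crd m x *\<^sub>R ev m \<and> prj m x \<in> EE m"
proof -
  assume m: "m < CARD('n)" and x: "x \<in> EE (Suc m)"
  show ?thesis
  proof
    show "x = prj m x + crd m x *\<^sub>R ev m"
    proof (subst vec_eq_iff, intro allI)
      fix i :: 'n
      show "x $ i = (prj m x + crd m x *\<^sub>R ev m) $ i"
        using x crd_eq[of i m x] by (cases "ix i < m"; cases "ix i = m") (auto simp: prj_def ev_def EE_def)
    qed
    show "prj m x \<in> EE m" by (auto simp: prj_def EE_def)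
  qed
qed

lemma ev_EE: "ev m \<in> EE (Suc m)"
  by (auto simp: ev_def EE_def)

lemma EE_add: "x \<in> EE m \<Longrightarrow> y \<in> EE m \<Longrightarrow> x + y \<in> EE m"
  and EE_scale: "x \<in> EE m \<Longrightarrow> c *\<^sub>R x \<in> EE m"
  and EE_mono: "x \<in> EE m \<Longrightarrow> m \<le> k \<Longrightarrow> x \<in> EE k"
  by (auto simp: EE_def)

lemma conv_idx:
  fixes f :: "'i \<Rightarrow> 'a::real_vector"
  assumes "finite I" "inj_on f I"
  shows "x \<in> convex hull (f ` I) \<longleftrightarrow>
    (\<exists>\<mu>. (\<forall>i\<in>I. 0 \<le> \<mu> i) \<and> sum \<mu> I = 1 \<and> (\<Sum>i\<in>I. \<mu> i *\<^sub>R f i) = x)"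
proof
  assume "x \<in> convex hull (f ` I)"
  then obtain u where u: "\<forall>y\<in>f ` I. 0 \<le> u y" "sum u (f ` I) = 1" "(\<Sum>y\<in>f ` I. u y *\<^sub>R y) = x"
    using convex_hull_finite[of "f ` I"] assms by auto
  show "\<exists>\<mu>. (\<forall>i\<in>I. 0 \<le> \<mu> i) \<and> sum \<mu> I = 1 \<and> (\<Sum>i\<in>I. \<mu> i *\<^sub>R f i) = x"
  proof (intro exI conjI)
    show "\<forall>i\<in>I. 0 \<le> (u \<circ> f) i" using u(1) by simp
    show "sum (u \<circ> f) I = 1" using u(2) sum.reindex[OF assms(2), of u] by simp
    show "(\<Sum>i\<in>I. (u \<circ> f) i *\<^sub>R f i) = x"
      using u(3) sum.reindex[OF assms(2), of "\<lambda>y. u y *\<^sub>R y"] by (simp add: o_def)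
  qed
next
  assume "\<exists>\<mu>. (\<forall>i\<in>I. 0 \<le> \<mu> i) \<and> sum \<mu> I = 1 \<and> (\<Sum>i\<in>I. \<mu> i *\<^sub>R f i) = x"
  then obtain \<mu> where m: "\<forall>i\<in>I. 0 \<le> \<mu> i" "sum \<mu> I = 1" "(\<Sum>i\<in>I. \<mu> i *\<^sub>R f i) = x" by blast
  have "(\<Sum>i\<in>I. \<mu> i *\<^sub>R f i) \<in> convex hull (f ` I)"
    by (rule convex_sum) (use m assms in \<open>auto intro: hull_inc\<close>)
  then show "x \<in> convex hull (f ` I)" using m by simp
qed

lemma conv_sum_in:
  fixes f :: "'i \<Rightarrow> 'a::real_vector"
  assumes "finite I" "\<forall>i\<in>I. 0 \<le> \<mu> i" "sum \<mu> I = 1" "\<And>i. i \<in> I \<Longrightarrow> \<mu> i \<noteq> 0 \<Longrightarrow> f i \<in> S"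
  shows "(\<Sum>i\<in>I. \<mu> i *\<^sub>R f i) \<in> convex hull S"
proof -
  let ?J = "{i\<in>I. \<mu> i \<noteq> 0}"
  have e1: "(\<Sum>i\<in>I. \<mu> i *\<^sub>R f i) = (\<Sum>i\<in>?J. \<mu> i *\<^sub>R f i)"
    by (rule sum.mono_neutral_right) (use assms in auto)
  have e2: "sum \<mu> ?J = 1" using assms(3)
    by (subst sum.mono_neutral_left[of I]) (use assms in auto)
  have "(\<Sum>i\<in>?J. \<mu> i *\<^sub>R f i) \<in> convex hull S"
    by (rule convex_sum) (use assms e2 in \<open>auto intro: hull_inc\<close>)
  then show ?thesis using e1 by simp
qed

lemma aff_indep_zero:
  fixes f :: "'i \<Rightarrow> 'a::real_vector"
  assumes "finite I" "inj_on f I" "\<not> affine_dependent (f ` I)"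
    "sum u I = 0" "(\<Sum>i\<in>I. u i *\<^sub>R f i) = 0" "i \<in> I"
  shows "u i = 0"
proof (rule ccontr)
  assume ne: "u i \<noteq> 0"
  define U where "U v = u (the_inv_into I f v)" for v
  have U: "U (f j) = u j" if "j \<in> I" for j
    using that assms(2) by (simp add: U_def the_inv_into_f_f)
  have "sum U (f ` I) = 0"
    using assms(4) by (simp add: sum.reindex[OF assms(2)] U cong: sum.cong)
  moreover have "(\<Sum>v\<in>f ` I. U v *\<^sub>R v) = 0"
    using assms(5) by (simp add: sum.reindex[OF assms(2)] U cong: sum.cong)
  moreover have "\<exists>v\<in>f ` I. U v \<noteq> 0" using ne assms(6) U by force
  ultimately have "affine_dependent (f ` I)"
    using affine_dependent_explicit_finite[of "f ` I"] assms(1) by auto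
  then show False using assms(3) by simp
qed

lemma aff_indep_intro:
  fixes f :: "'i \<Rightarrow> 'a::real_vector"
  assumes "finite I" "inj_on f I"
    "\<And>u. sum u I = 0 \<Longrightarrow> (\<Sum>i\<in>I. u i *\<^sub>R f i) = 0 \<Longrightarrow> \<forall>i\<in>I. u i = 0"
  shows "\<not> affine_dependent (f ` I)"
proof
  assume "affine_dependent (f ` I)"
  then obtain U where U: "sum U (f ` I) = 0" "\<exists>v\<in>f ` I. U v \<noteq> 0" "(\<Sum>v\<in>f ` I. U v *\<^sub>R v) = 0"
    using affine_dependent_explicit_finite[of "f ` I"] assms(1) by auto
  have "sum (U \<circ> f) I = 0" "(\<Sum>i\<in>I. (U \<circ> f) i *\<^sub>R f i) = 0"
    using U sum.reindex[OF assms(2), of U] sum.reindex[OF assms(2), of "\<lambda>v. U v *\<^sub>R v"] by (auto simp: o_def)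
  then have "\<forall>i\<in>I. (U \<circ> f) i = 0" by (rule assms(3))
  then show False using U(2) by auto
qed

lemma bary_unique:
  fixes f :: "'i \<Rightarrow> 'a::real_vector"
  assumes "finite I" "inj_on f I" "\<not> affine_dependent (f ` I)"
    "sum u I = sum w I" "(\<Sum>i\<in>I. u i *\<^sub>R f i) = (\<Sum>i\<in>I. w i *\<^sub>R f i)" "i \<in> I"
  shows "u i = w i"
proof -
  have "(\<lambda>i. u i - w i) i = 0"
    by (rule aff_indep_zero[OF assms(1-3) _ _ assms(6)])
       (use assms(4,5) in \<open>simp_all add: sum_subtractf scaleR_diff_left\<close>)
  then show ?thesis by simp
qed

definition col :: "nat \<Rightarrow> int \<Rightarrow> nat" where "col n j = nat (j mod int n)"
definition tau :: "nat \<Rightarrow> int \<Rightarrow> nat \<Rightarrow> nat" where "tau n z c = nat ((int c - z) mod int n)"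
definition TT :: "nat \<Rightarrow> (nat \<Rightarrow> real) \<Rightarrow> int \<Rightarrow> real" where
  "TT n lam z = (\<Sum>k<n. lam (col n (z + int k)) * of_int (z + int k))"
definition kap :: "nat \<Rightarrow> int \<Rightarrow> (nat \<Rightarrow> real) \<Rightarrow> nat \<Rightarrow> real" where
  "kap n z w c = w (tau n z c) + (if c = col n z then w n else 0)"

lemma col_lt: "0 < n \<Longrightarrow> col n j < n"
  by (simp add: col_def nat_less_iff)

lemma col_add_n: "col n (j + int n) = col n j"
  by (simp add: col_def)

lemma tau_lt: "0 < n \<Longrightarrow> tau n z c < n"
  by (simp add: tau_def nat_less_iff)

lemma col_tau: "c < n \<Longrightarrow> col n (z + int (tau n z c)) = c"
proof -
  assume c: "c < n"
  have "(z + (int c - z) mod int n) mod int n = int c mod int n"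
    by (metis add.commute diff_add_cancel mod_add_right_eq)
  then show ?thesis using c by (simp add: col_def tau_def)
qed

lemma tau_col: "k < n \<Longrightarrow> tau n z (col n (z + int k)) = k"
proof -
  assume k: "k < n"
  then have n: "0 < n" by simp
  have c: "int (col n (z + int k)) = (z + int k) mod int n" using n by (simp add: col_def)
  have "((z + int k) mod int n - z) mod int n = int k mod int n"
    by (simp add: mod_diff_left_eq)
  then show ?thesis using k by (simp add: tau_def c)
qed

lemma col_eq_iff: "k < n \<Longrightarrow> k' < n \<Longrightarrow> col n (z + int k) = col n (z + int k') \<longleftrightarrow> k = k'"
  by (metis tau_col)

lemma col_z: "col n (z + 0) = col n z" by simp

lemma sum_window:
  fixes g :: "nat \<Rightarrow> 'a::comm_monoid_add"
  assumes "0 < n"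
  shows "(\<Sum>k<n. g (col n (z + int k))) = (\<Sum>c<n. g c)"
  by (rule sum.reindex_bij_witness[of _ "tau n z" "\<lambda>k. col n (z + int k)"])
     (use assms in \<open>auto simp: col_tau tau_col tau_lt col_lt\<close>)

lemma sum_kap:
  fixes g :: "nat \<Rightarrow> 'a::real_vector"
  assumes "0 < n"
  shows "(\<Sum>k\<le>n. w k *\<^sub>R g (col n (z + int k))) = (\<Sum>c<n. kap n z w c *\<^sub>R g c)"
proof -
  have "(\<Sum>k\<le>n. w k *\<^sub>R g (col n (z + int k))) = (\<Sum>k<n. w k *\<^sub>R g (col n (z + int k))) + w n *\<^sub>R g (col n z)"
    by (simp add: lessThan_Suc_atMost[symmetric] col_add_n add.commute)
  also have "(\<Sum>k<n. w k *\<^sub>R g (col n (z + int k))) = (\<Sum>c<n. w (tau n z c) *\<^sub>R g c)"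
    by (rule sum.reindex_bij_witness[of _ "tau n z" "\<lambda>k. col n (z + int k)"])
       (use assms in \<open>auto simp: col_tau tau_col tau_lt col_lt\<close>)
  also have "w n *\<^sub>R g (col n z) = (\<Sum>c<n. (if c = col n z then w n else 0) *\<^sub>R g c)"
    using col_lt[OF assms, of z] by (simp add: if_distrib[of "\<lambda>x. x *\<^sub>R _"] sum.delta cong: if_cong)
  finally show ?thesis by (simp add: kap_def scaleR_add_left sum.distrib)
qed

lemma sum_kap_real:
  assumes "0 < n"
  shows "(\<Sum>k\<le>n. w k * g (col n (z + int k))) = (\<Sum>c<n. kap n z w c * g c)"
  using sum_kap[OF assms, of w "\<lambda>c. g c" z] by simp

lemma sum_kap1:
  assumes "0 < n"
  shows "(\<Sum>k\<le>n. w k) = (\<Sum>c<n. kap n z w c)"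
  using sum_kap_real[OF assms, of w "\<lambda>_. 1" z] by simp

lemma kap_in: "k < n \<Longrightarrow> kap n z w (col n (z + int k)) = w k + (if k = 0 then w n else 0)"
proof -
  assume k: "k < n"
  have "col n (z + int k) = col n z \<longleftrightarrow> k = 0"
    using col_eq_iff[OF k, of 0 z] k by auto
  then show ?thesis using k by (simp add: kap_def tau_col)
qed

lemma TT_step: "TT n lam (z + 1) = TT n lam z + real n * lam (col n z)"
proof -
  let ?f = "\<lambda>k::nat. lam (col n (z + int k)) * of_int (z + int k)"
  have "(\<Sum>k<Suc n. ?f k) = ?f 0 + (\<Sum>k<n. ?f (Suc k))" by (rule sum.lessThan_Suc_shift)
  moreover have "(\<Sum>k<Suc n. ?f k) = (\<Sum>k<n. ?f k) + ?f n" by simp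
  moreover have "(\<Sum>k<n. ?f (Suc k)) = TT n lam (z+1)"
    unfolding TT_def by (rule sum.cong) (auto simp: add_ac)
  moreover have "?f n = lam (col n z) * of_int (z + int n)" by (simp add: col_add_n)
  ultimately show ?thesis unfolding TT_def by (simp add: algebra_simps)
qed

lemma TT_mono_nat: "(\<forall>c. 0 \<le> lam c) \<Longrightarrow> TT n lam z \<le> TT n lam (z + int d)"
proof (induction d)
  case 0 then show ?case by simp
next
  case (Suc d)
  have "TT n lam (z + int d) \<le> TT n lam (z + int d + 1)"
    using TT_step[of n lam "z + int d"] Suc.prems by simp
  moreover have "z + int (Suc d) = z + int d + 1" by simp
  ultimately show ?case using Suc by (metis order_trans)
qed

lemma TT_mono: "(\<forall>c. 0 \<le> lam c) \<Longrightarrow> z \<le> z' \<Longrightarrow> TT n lam z \<le> TT n lam z'"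
  using TT_mono_nat[of lam n z "nat (z' - z)"] by simp

lemma TT_bounds:
  assumes "\<forall>c. 0 \<le> lam c" "(\<Sum>c<n. lam c) = 1" "0 < n"
  shows "of_int z \<le> TT n lam z \<and> TT n lam z \<le> of_int z + real n"
proof -
  have s1: "(\<Sum>k<n. lam (col n (z + int k))) = 1" using sum_window[OF assms(3), of lam z] assms(2) by simp
  have "(\<Sum>k<n. lam (col n (z + int k)) * of_int z) \<le> TT n lam z"
    unfolding TT_def by (rule sum_mono) (use assms in \<open>auto intro: mult_left_mono\<close>)
  moreover have "TT n lam z \<le> (\<Sum>k<n. lam (col n (z + int k)) * (of_int z + real n))"
    unfolding TT_def by (rule sum_mono) (use assms in \<open>auto intro: mult_left_mono\<close>)
  ultimately show ?thesis using s1 by (simp add: sum_distrib_right[symmetric])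
qed

lemma TT_exists:
  assumes "\<forall>c. 0 \<le> lam c" "(\<Sum>c<n. lam c) = 1" "0 < n"
  shows "\<exists>z. TT n lam z \<le> s \<and> s \<le> TT n lam (z + 1)"
proof -
  define z0 where "z0 = \<lfloor>s\<rfloor> - int n"
  have ex: "\<exists>k. s < TT n lam (z0 + int k)"
  proof
    show "s < TT n lam (z0 + int (n + 1))"
    proof -
      have "s < of_int (z0 + int (n + 1))" unfolding z0_def
        using real_of_int_floor_add_one_gt[of s] by simp
      then show ?thesis using TT_bounds[OF assms, of "z0 + int (n+1)"] by linarith
    qed
  qed
  define k where "k = (LEAST k. s < TT n lam (z0 + int k))"
  have k1: "s < TT n lam (z0 + int k)" unfolding k_def using LeastI_ex[OF ex] .
  have "k \<noteq> 0"
  proof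
    assume "k = 0"
    then have "s < TT n lam z0" using k1 by simp
    moreover have "TT n lam z0 \<le> s"
    proof -
      have "of_int z0 + real n \<le> s" unfolding z0_def using of_int_floor_le[of s] by simp
      then show ?thesis using TT_bounds[OF assms, of z0] by linarith
    qed
    ultimately show False by simp
  qed
  then obtain k' where k': "k = Suc k'" by (cases k) auto
  have "\<not> s < TT n lam (z0 + int k')"
    using not_less_Least[of k' "\<lambda>k. s < TT n lam (z0 + int k)"] k' unfolding k_def by simp
  then show ?thesis using k1 k' by (intro exI[of _ "z0 + int k'"]) (auto simp: add_ac)
qed

definition BB :: "nat \<Rightarrow> real \<Rightarrow> (nat \<Rightarrow> (real,'n::{finite,linorder}) vec) \<Rightarrow> int \<Rightarrow> (real,'n) vec" where
  "BB l q a j = a (col (Suc l) j) + (of_int j * q) *\<^sub>R ev l"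

definition colassm :: "nat \<Rightarrow> (nat \<Rightarrow> (real,'n::{finite,linorder}) vec) \<Rightarrow> bool" where
  "colassm l a \<longleftrightarrow> (\<forall>c<Suc l. a c \<in> EE l) \<and> inj_on a {..<Suc l} \<and> \<not> affine_dependent (a ` {..<Suc l})"

definition mu :: "nat \<Rightarrow> (nat \<Rightarrow> real) \<Rightarrow> real \<Rightarrow> int \<Rightarrow> nat \<Rightarrow> real" where
  "mu n lam s z k = (if k = 0 then (TT n lam (z+1) - s) / real n
     else if k = n then lam (col n z) - (TT n lam (z+1) - s) / real n
     else lam (col n (z + int k)))"

lemma prj_add: "prj m (x + y) = prj m x + prj m y" and prj_scale: "prj m (c *\<^sub>R x) = c *\<^sub>R prj m x"
  by (auto simp: prj_def vec_eq_iff)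

lemma crd_add: "crd m (x + y) = crd m x + crd m y" and crd_scale: "crd m (c *\<^sub>R x) = c * crd m x"
  by (auto simp: crd_def inner_add_left)

lemma prj_BB:
  assumes "colassm l a"
  shows "prj l (BB l q a j) = a (col (Suc l) j)"
proof -
  have "a (col (Suc l) j) \<in> EE l" using assms col_lt[of "Suc l" j] by (auto simp: colassm_def)
  then show ?thesis
    using prj_EE[OF \<open>a (col (Suc l) j) \<in> EE l\<close>] by (simp add: BB_def prj_add prj_scale prj_ev)
qed

lemma crd_BB:
  assumes "colassm l a" "l < CARD('n::{finite,linorder})"
  shows "crd l (BB l q (a:: nat \<Rightarrow> (real,'n) vec) j) = of_int j * q"
proof -
  have "a (col (Suc l) j) \<in> EE l" using assms col_lt[of "Suc l" j] by (auto simp: colassm_def)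
  then show ?thesis
    using crd_EE crd_ev[OF assms(2)] by (simp add: BB_def crd_add crd_scale)
qed

lemma mu_sum:
  fixes g :: "int \<Rightarrow> 'a::real_vector"
  assumes n: "0 < n"
  shows "(\<Sum>k\<le>n. mu n lam s z k *\<^sub>R g (z + int k)) =
    (\<Sum>k<n. lam (col n (z + 1 + int k)) *\<^sub>R g (z + 1 + int k))
      - ((TT n lam (z+1) - s) / real n) *\<^sub>R (g (z + int n) - g z)"
proof -
  let ?t = "(TT n lam (z+1) - s) / real n"
  let ?f = "\<lambda>k. mu n lam s z k *\<^sub>R g (z + int k)"
  have "(\<Sum>k\<le>n. ?f k) = (\<Sum>k<Suc n. ?f k)" by (simp add: lessThan_Suc_atMost)
  also have "\<dots> = ?f 0 + (\<Sum>k<n. ?f (Suc k))" by (rule sum.lessThan_Suc_shift)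
  also have "(\<Sum>k<n. ?f (Suc k)) = (\<Sum>k<n. lam (col n (z + 1 + int k)) *\<^sub>R g (z + 1 + int k)
          - (if Suc k = n then ?t *\<^sub>R g (z + int n) else 0))"
  proof (rule sum.cong)
    fix k assume k: "k \<in> {..<n}"
    show "?f (Suc k) = lam (col n (z + 1 + int k)) *\<^sub>R g (z + 1 + int k)
          - (if Suc k = n then ?t *\<^sub>R g (z + int n) else 0)"
    proof (cases "Suc k = n")
      case True
      then have e: "z + 1 + int k = z + int n" "z + int (Suc k) = z + int n" by simp_all
      have c: "col n (z + int n) = col n z" by (simp only: col_add_n)
      show ?thesis unfolding e c using True by (simp add: mu_def scaleR_diff_left)
    next
      case False
      then show ?thesis by (simp add: mu_def add_ac)
    qed
  qed simp
  also have "\<dots> = (\<Sum>k<n. lam (col n (z + 1 + int k)) *\<^sub>R g (z + 1 + int k)) - ?t *\<^sub>R g (z + int n)"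
  proof -
    have "(\<Sum>k<n. (if Suc k = n then ?t *\<^sub>R g (z + int n) else 0)) = ?t *\<^sub>R g (z + int n)"
    proof -
      obtain m where m: "n = Suc m" using n by (cases n) auto
      show ?thesis unfolding m by (simp add: sum.delta' cong: if_cong)
    qed
    then show ?thesis by (simp add: sum_subtractf)
  qed
  finally show ?thesis by (simp add: mu_def scaleR_diff_right algebra_simps)
qed

lemma mu_props:
  assumes n: "0 < n" and lam: "\<forall>c. 0 \<le> lam c" "(\<Sum>c<n. lam c) = 1"
    and s: "TT n lam z \<le> s" "s \<le> TT n lam (z+1)"
  shows "\<forall>k\<le>n. 0 \<le> mu n lam s z k \<and> mu n lam s z k \<le> lam (col n (z + int k))"
    and "(\<Sum>k\<le>n. mu n lam s z k) = 1"
    and "(\<Sum>k\<le>n. mu n lam s z k * of_int (z + int k)) = s"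
    and "\<And>g :: nat \<Rightarrow> 'a::real_vector. (\<Sum>k\<le>n. mu n lam s z k *\<^sub>R g (col n (z + int k))) = (\<Sum>c<n. lam c *\<^sub>R g c)"
proof -
  let ?t = "(TT n lam (z+1) - s) / real n"
  have st: "TT n lam (z+1) = TT n lam z + real n * lam (col n z)" by (rule TT_step)
  have t0: "0 \<le> ?t" using s n by simp
  have t1: "?t \<le> lam (col n z)" using s n st by (simp add: divide_le_eq mult.commute)
  show "\<forall>k\<le>n. 0 \<le> mu n lam s z k \<and> mu n lam s z k \<le> lam (col n (z + int k))"
    using t0 t1 lam col_add_n[of n z] by (auto simp: mu_def)
  have w: "(\<Sum>k<n. f (col n (z + 1 + int k))) = (\<Sum>c<n. f c)" for f :: "nat \<Rightarrow> 'b::comm_monoid_add"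
    using sum_window[OF n, of f "z+1"] by simp
  show "(\<Sum>k\<le>n. mu n lam s z k) = 1"
    using mu_sum[OF n, of lam s z "\<lambda>_. 1::real"] w[of lam] lam by simp
  have "(\<Sum>k<n. lam (col n (z + 1 + int k)) * of_int (z + 1 + int k)) = TT n lam (z+1)"
    by (simp add: TT_def add_ac)
  then show "(\<Sum>k\<le>n. mu n lam s z k * of_int (z + int k)) = s"
    using mu_sum[OF n, of lam s z "\<lambda>j. of_int j :: real"] n by simp
  show "(\<Sum>k\<le>n. mu n lam s z k *\<^sub>R g (col n (z + int k))) = (\<Sum>c<n. lam c *\<^sub>R g c)" for g :: "nat \<Rightarrow> 'a"
    using mu_sum[OF n, of lam s z "\<lambda>j. g (col n j)"] w[of "\<lambda>c. lam c *\<^sub>R g c"] col_add_n[of n z]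
    by (simp add: add_ac)
qed

lemma prj_sum: "prj m (\<Sum>i\<in>S. f i) = (\<Sum>i\<in>S. prj m (f i))"
  by (induction S rule: infinite_finite_induct) (auto simp: prj_add prj_def vec_eq_iff)

lemma crd_sum: "crd m (\<Sum>i\<in>S. f i) = (\<Sum>i\<in>S. crd m (f i))"
  by (induction S rule: infinite_finite_induct) (auto simp: crd_def inner_add_left)

lemma BB_sum:
  "(\<Sum>k\<in>S. w k *\<^sub>R BB l q a (z + int k)) =
    (\<Sum>k\<in>S. w k *\<^sub>R a (col (Suc l) (z + int k))) + ((\<Sum>k\<in>S. w k * of_int (z + int k)) * q) *\<^sub>R ev l"
  by (simp add: BB_def scaleR_add_right sum.distrib scaleR_sum_left[symmetric] sum_distrib_right mult.assoc)

lemma col_inj: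
  assumes "colassm l a" "l < CARD('n::{finite,linorder})" "q \<noteq> 0"
  shows "inj_on (\<lambda>k. BB l q (a :: nat \<Rightarrow> (real,'n) vec) (z + int k)) S"
proof
  fix k k' assume "BB l q a (z + int k) = BB l q a (z + int k')"
  then have "crd l (BB l q a (z + int k)) = crd l (BB l q a (z + int k'))" by simp
  then show "k = k'" using crd_BB[OF assms(1,2)] assms(3) by simp
qed

lemma col_indep:
  assumes ca: "colassm l a" and l: "l < CARD('n::{finite,linorder})" and q: "q \<noteq> 0"
  shows "\<not> affine_dependent ((\<lambda>k. BB l q (a :: nat \<Rightarrow> (real,'n) vec) (z + int k)) ` {..Suc l})"
proof (rule aff_indep_intro)
  show "finite {..Suc l}" by simp
  show "inj_on (\<lambda>k. BB l q a (z + int k)) {..Suc l}" by (rule col_inj[OF assms])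
  fix u assume u1: "sum u {..Suc l} = 0" and u2: "(\<Sum>k\<le>Suc l. u k *\<^sub>R BB l q a (z + int k)) = 0"
  let ?n = "Suc l"
  have "(\<Sum>k\<le>?n. u k *\<^sub>R a (col ?n (z + int k))) = prj l (\<Sum>k\<le>?n. u k *\<^sub>R BB l q a (z + int k))"
    unfolding prj_sum prj_scale prj_BB[OF ca] ..
  also have "\<dots> = 0" unfolding u2 by (simp add: prj_def vec_eq_iff)
  finally have p: "(\<Sum>k\<le>?n. u k *\<^sub>R a (col ?n (z + int k))) = 0" .
  have "(\<Sum>k\<le>?n. u k * of_int (z + int k)) * q = crd l (\<Sum>k\<le>?n. u k *\<^sub>R BB l q a (z + int k))"
    unfolding crd_sum crd_scale crd_BB[OF ca l] sum_distrib_right by (simp add: mult.assoc)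
  also have "\<dots> = 0" unfolding u2 by (simp add: crd_def)
  finally have c: "(\<Sum>k\<le>?n. u k * of_int (z + int k)) = 0" using q by simp
  have kz: "kap ?n z u c = 0" if "c < ?n" for c
  proof (rule aff_indep_zero[of "{..<?n}" a])
    show "finite {..<?n}" by simp
    show "inj_on a {..<?n}" "\<not> affine_dependent (a ` {..<?n})" using ca by (auto simp: colassm_def)
    show "sum (kap ?n z u) {..<?n} = 0" using sum_kap1[of ?n u z] u1 by simp
    show "(\<Sum>c<?n. kap ?n z u c *\<^sub>R a c) = 0" using sum_kap[of ?n u a z] p by simp
  qed (use that in simp)
  have mid: "u k = 0" if "0 < k" "k < ?n" for k
    using kz[OF col_lt[of ?n "z + int k"]] kap_in[OF that(2), of z u] that by simp
  have z0: "u 0 + u ?n = 0"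
    using kz[OF col_lt[of ?n "z + int 0"]] kap_in[of 0 ?n z u] by simp
  have "(\<Sum>k\<le>?n. u k * of_int (z + int k)) = (\<Sum>k\<in>{0, ?n}. u k * of_int (z + int k))"
    by (rule sum.mono_neutral_right) (use mid in auto)
  then have "u 0 * of_int z + u ?n * (of_int z + real ?n) = 0" using c by simp
  moreover have e: "u 0 = - u ?n" using z0 by linarith
  ultimately have "(- u ?n) * of_int z + u ?n * (of_int z + real ?n) = 0" by simp
  then have "u ?n * real ?n = 0" by (simp add: ring_distribs)
  then have un: "u ?n = 0" by simp
  show "\<forall>k\<in>{..?n}. u k = 0"
  proof
    fix k assume "k \<in> {..?n}"
    then show "u k = 0" using mid[of k] un z0 by (cases "k = 0"; cases "k = ?n") auto
  qed
qed

lemma col_C1: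
  assumes ca: "colassm l a" and l: "l < CARD('n::{finite,linorder})" and q: "q \<noteq> 0"
    and x: "x \<in> convex hull ((\<lambda>k. BB l q (a :: nat \<Rightarrow> (real,'n) vec) (z + int k)) ` {..Suc l})"
  shows "\<exists>lam. (\<forall>c. 0 \<le> lam c) \<and> (\<Sum>c<Suc l. lam c) = 1 \<and> prj l x = (\<Sum>c<Suc l. lam c *\<^sub>R a c)
     \<and> TT (Suc l) lam z \<le> crd l x / q \<and> crd l x / q \<le> TT (Suc l) lam (z+1)"
proof -
  let ?n = "Suc l"
  obtain w where w: "\<forall>k\<in>{..?n}. 0 \<le> w k" "sum w {..?n} = 1" "(\<Sum>k\<le>?n. w k *\<^sub>R BB l q a (z + int k)) = x"
    using x conv_idx[of "{..?n}" "\<lambda>k. BB l q a (z + int k)"] col_inj[OF assms(1-3)] by auto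
  define lam where "lam = kap ?n z w"
  define s where "s = (\<Sum>k\<le>?n. w k * of_int (z + int k))"
  have "\<forall>c. 0 \<le> w (tau ?n z c)" using w(1) tau_lt[of ?n z] by (metis atMost_iff less_imp_le_nat zero_less_Suc)
  then have lam0: "\<forall>c. 0 \<le> lam c" using w(1) by (auto simp: lam_def kap_def)
  have lam1: "(\<Sum>c<?n. lam c) = 1" using sum_kap1[of ?n w z] w(2) by (simp add: lam_def)
  have "prj l x = (\<Sum>k\<le>?n. w k *\<^sub>R a (col ?n (z + int k)))"
    unfolding w(3)[symmetric] prj_sum prj_scale prj_BB[OF ca] ..
  also have "\<dots> = (\<Sum>c<?n. lam c *\<^sub>R a c)" unfolding lam_def by (rule sum_kap) simp
  finally have px: "prj l x = (\<Sum>c<?n. lam c *\<^sub>R a c)" .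
  have "crd l x = s * q"
    unfolding w(3)[symmetric] crd_sum crd_scale crd_BB[OF ca l] s_def sum_distrib_right by (simp add: mult.assoc)
  then have cx: "crd l x / q = s" using q by simp
  have "TT ?n lam z = (\<Sum>k<?n. (w k + (if k = 0 then w ?n else 0)) * of_int (z + int k))"
    unfolding TT_def lam_def by (rule sum.cong) (auto simp: kap_in)
  also have "\<dots> = (\<Sum>k<?n. w k * of_int (z + int k)) + w ?n * of_int z"
    by (simp add: distrib_right sum.distrib if_distrib[of "\<lambda>x. x * _"] sum.delta cong: if_cong)
  also have "\<dots> = s - real ?n * w ?n"
    by (simp add: s_def lessThan_Suc_atMost[symmetric] algebra_simps)
  finally have t0: "TT ?n lam z = s - real ?n * w ?n" .
  have t1: "TT ?n lam (z+1) = s + real ?n * w 0"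
    using TT_step[of ?n lam z] t0 kap_in[of 0 ?n z w] by (simp add: lam_def algebra_simps)
  have "0 \<le> w ?n" "0 \<le> w 0" using w(1) by auto
  then have "TT ?n lam z \<le> s" "s \<le> TT ?n lam (z+1)" using t0 t1 by simp_all
  then show ?thesis
    using lam0 lam1 px cx by (intro exI[of _ lam]) simp
qed

lemma col_meet:
  assumes ca: "colassm l a" and l: "l < CARD('n::{finite,linorder})" and q: "q \<noteq> 0"
    and lam: "\<forall>c. 0 \<le> lam c" "(\<Sum>c<Suc l. lam c) = 1"
    and agree: "\<forall>c<Suc l. lam c \<noteq> 0 \<longrightarrow> a c = a' c"
    and zz: "z \<le> z'"
    and s: "TT (Suc l) lam z \<le> s" "s \<le> TT (Suc l) lam (z+1)"
    and s': "TT (Suc l) lam z' \<le> s" "s \<le> TT (Suc l) lam (z'+1)"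
  shows "(\<Sum>c<Suc l. lam c *\<^sub>R a c) + (s * q) *\<^sub>R ev l \<in>
     convex hull ((\<lambda>k. BB l q (a :: nat \<Rightarrow> (real,'n) vec) (z + int k)) ` {..Suc l}
                \<inter> (\<lambda>k. BB l q a' (z' + int k)) ` {..Suc l})"
proof -
  let ?n = "Suc l"
  let ?m = "mu ?n lam s z"
  note mp = mu_props[of ?n lam z s, OF _ lam s]
  have eq: "(\<Sum>k\<le>?n. ?m k *\<^sub>R BB l q a (z + int k)) = (\<Sum>c<?n. lam c *\<^sub>R a c) + (s * q) *\<^sub>R ev l"
    using mp(3,4) by (simp add: BB_sum)
  have "(\<Sum>k\<le>?n. ?m k *\<^sub>R BB l q a (z + int k)) \<in> convex hull
     ((\<lambda>k. BB l q a (z + int k)) ` {..?n} \<inter> (\<lambda>k. BB l q a' (z' + int k)) ` {..?n})"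
  proof (rule conv_sum_in)
    show "finite {..?n}" by simp
    show "\<forall>k\<in>{..?n}. 0 \<le> ?m k" using mp(1) by auto
    show "sum ?m {..?n} = 1" using mp(2) by simp
    fix k assume k: "k \<in> {..?n}" and mk: "?m k \<noteq> 0"
    have lk: "lam (col ?n (z + int k)) \<noteq> 0" using mp(1) k mk by force
    have ge: "z' \<le> z + int k"
    proof (rule ccontr)
      assume "\<not> z' \<le> z + int k"
      then have lt: "z + int k < z'" by simp
      have "TT ?n lam (z+1) \<le> TT ?n lam z'" using TT_mono[OF lam(1)] lt by simp
      then have seq: "s = TT ?n lam (z+1)" "TT ?n lam z' = s" using s s' by linarith+
      show False
      proof (cases "k = 0")
        case True
        then show False using mk seq by (simp add: mu_def)
      next
        case False
        have a1: "TT ?n lam (z+1) \<le> TT ?n lam (z + int k)" using TT_mono[OF lam(1)] False by simp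
        have a2: "TT ?n lam (z + int k + 1) \<le> TT ?n lam z'" using TT_mono[OF lam(1)] lt by simp
        have "TT ?n lam (z + int k + 1) = TT ?n lam (z + int k) + real ?n * lam (col ?n (z + int k))"
          by (rule TT_step)
        then have "real ?n * lam (col ?n (z + int k)) \<le> 0" using a1 a2 seq by linarith
        then have "lam (col ?n (z + int k)) \<le> 0" by (simp add: mult_le_0_iff)
        then show False using lk lam(1) by (metis order_antisym)
      qed
    qed
    have ag: "a (col ?n (z + int k)) = a' (col ?n (z + int k))"
      using agree lk col_lt[of ?n "z + int k"] by auto
    have "BB l q a (z + int k) = BB l q a' (z' + int (nat (z + int k - z')))"
      using ge ag by (simp add: BB_def)
    moreover have "nat (z + int k - z') \<le> ?n" using ge zz k by simp
    ultimately have "BB l q a (z + int k) \<in> (\<lambda>k. BB l q a' (z' + int k)) ` {..?n}"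
      by (intro image_eqI[of _ _ "nat (z + int k - z')"]) auto
    moreover have "BB l q a (z + int k) \<in> (\<lambda>k. BB l q a (z + int k)) ` {..?n}"
      using k by (rule imageI)
    ultimately show "BB l q a (z + int k) \<in>
       (\<lambda>k. BB l q a (z + int k)) ` {..?n} \<inter> (\<lambda>k. BB l q a' (z' + int k)) ` {..?n}"
      by (rule IntI[rotated])
  qed
  then show ?thesis using eq by simp
qed

lemma sum_restrict_image:
  fixes g :: "'a \<Rightarrow> 'b::comm_monoid_add"
  assumes "finite I" "inj_on a I" "S \<subseteq> a ` I"
  shows "(\<Sum>c\<in>I. if a c \<in> S then g (a c) else 0) = (\<Sum>v\<in>S. g v)"
proof -
  have "(\<Sum>c\<in>I. if a c \<in> S then g (a c) else 0) = (\<Sum>c\<in>{c\<in>I. a c \<in> S}. g (a c))"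
    using assms(1) by (simp add: sum.inter_filter)
  also have "\<dots> = (\<Sum>v\<in>a ` {c\<in>I. a c \<in> S}. g v)"
  proof -
    have "inj_on a {c\<in>I. a c \<in> S}" by (rule inj_on_subset[OF assms(2)]) auto
    then show ?thesis by (simp add: sum.reindex)
  qed
  also have "a ` {c\<in>I. a c \<in> S} = S" using assms(3) by auto
  finally show ?thesis .
qed

lemma match_bary:
  fixes a a' :: "nat \<Rightarrow> 'v::real_vector"
  assumes inj: "inj_on a {..<n}" "inj_on a' {..<n}"
    and ind: "\<not> affine_dependent (a ` {..<n})" "\<not> affine_dependent (a' ` {..<n})"
    and cc: "\<forall>c<n. \<forall>c'<n. a c = a' c' \<longrightarrow> c = c'"
    and l1: "(\<Sum>c<n. lam c) = 1" and l2: "(\<Sum>c<n. lam' c) = 1"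
    and y1: "y = (\<Sum>c<n. lam c *\<^sub>R a c)" and y2: "y = (\<Sum>c<n. lam' c *\<^sub>R a' c)"
    and yS: "y \<in> convex hull (a ` {..<n} \<inter> a' ` {..<n})"
  shows "\<forall>c<n. lam c = lam' c \<and> (lam c \<noteq> 0 \<longrightarrow> a c = a' c)"
proof -
  let ?S = "a ` {..<n} \<inter> a' ` {..<n}"
  have fS: "finite ?S" by simp
  obtain nu where nu: "\<forall>v\<in>?S. 0 \<le> nu v" "sum nu ?S = 1" "(\<Sum>v\<in>?S. nu v *\<^sub>R v) = y"
    using yS convex_hull_finite[OF fS] by auto
  define k where "k c = (if a c \<in> ?S then nu (a c) else 0)" for c
  define k' where "k' c = (if a' c \<in> ?S then nu (a' c) else 0)" for c
  have "(\<Sum>c<n. k c) = 1"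
    using sum_restrict_image[of "{..<n}" a ?S nu] inj nu(2) by (simp add: k_def)
  moreover have "(\<Sum>c<n. k c *\<^sub>R a c) = y"
    using sum_restrict_image[of "{..<n}" a ?S "\<lambda>v. nu v *\<^sub>R v"] inj nu(3)
    by (simp add: k_def if_distrib[of "\<lambda>x. x *\<^sub>R _"] cong: if_cong)
  ultimately have lk: "lam c = k c" if "c < n" for c
    using bary_unique[of "{..<n}" a lam k c] inj ind l1 y1 that by auto
  have "(\<Sum>c<n. k' c) = 1"
    using sum_restrict_image[of "{..<n}" a' ?S nu] inj nu(2) by (simp add: k'_def)
  moreover have "(\<Sum>c<n. k' c *\<^sub>R a' c) = y"
    using sum_restrict_image[of "{..<n}" a' ?S "\<lambda>v. nu v *\<^sub>R v"] inj nu(3)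
    by (simp add: k'_def if_distrib[of "\<lambda>x. x *\<^sub>R _"] cong: if_cong)
  ultimately have lk': "lam' c = k' c" if "c < n" for c
    using bary_unique[of "{..<n}" a' lam' k' c] inj ind l2 y2 that by auto
  show ?thesis
  proof (intro allI impI)
    fix c assume c: "c < n"
    show "lam c = lam' c \<and> (lam c \<noteq> 0 \<longrightarrow> a c = a' c)"
    proof (cases "a c \<in> ?S")
      case True
      then obtain c' where "c' < n" "a c = a' c'" by auto
      then have "a c = a' c" using cc c by auto
      then show ?thesis using True lk lk' c by (simp add: k_def k'_def)
    next
      case False
      have "a' c \<notin> ?S"
      proof
        assume "a' c \<in> ?S"
        then obtain c' where "c' < n" "a' c = a c'" by auto
        then have "a' c = a c" using cc c by metis
        then show False using False \<open>a' c \<in> ?S\<close> by simp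
      qed
      then show ?thesis using False lk lk' c by (simp add: k_def k'_def)
    qed
  qed
qed

lemma TT_cong: "0 < n \<Longrightarrow> (\<forall>c<n. lam c = lam' c) \<Longrightarrow> TT n lam z = TT n lam' z"
  unfolding TT_def by (rule sum.cong) (auto simp: col_lt)

definition stepL :: "(nat \<Rightarrow> real) \<Rightarrow> nat \<Rightarrow> real list list \<times> int \<Rightarrow> real list list" where
  "stepL p l = (\<lambda>(A, z). map (\<lambda>i. let j = z + ((int i - z) mod int (l+2))
                 in A ! nat (j mod int (l+1)) @ [of_int j * p (l+1)]) [0..<l+2])"

fun tv :: "(nat \<Rightarrow> real) \<Rightarrow> nat \<Rightarrow> real list list set" where
  "tv p 0 = {[[]]}"
| "tv p (Suc l) = stepL p l ` (tv p l \<times> UNIV)"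

lemma tess_vertices_tv: "0 < m \<Longrightarrow> tess_vertices p m = tv p m"
proof (induction m rule: less_induct)
  case (less m)
  show ?case
  proof (cases m)
    case 0 then show ?thesis using less by simp
  next
    case (Suc l)
    show ?thesis
    proof (cases l)
      case 0
      have e: "(if z mod 2 = 0 then [[of_int z * p 1], [of_int (z + 1) * p 1]]
               else [[of_int (z + 1) * p 1], [of_int z * p 1]]) = stepL p 0 ([[]], z)" for z :: int
      proof (cases "z mod 2 = 0")
        case True
        have "(1 - z) mod 2 = 1" "(- z) mod 2 = 0" using True by presburger+
        then show ?thesis using True by (simp add: stepL_def upt_rec mod_diff_left_eq)
      next
        case False
        have "(- z) mod 2 = 1" "(1 - z) mod 2 = 0" using False by presburger+
        then show ?thesis using False by (simp add: stepL_def upt_rec algebra_simps)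
      qed
      show ?thesis unfolding Suc 0 by (auto simp: e image_iff)
    next
      case (Suc k)
      have ih: "tess_vertices p (Suc k) = tv p (Suc k)" using less Suc \<open>m = Suc l\<close> by simp
      have e1: "Suc k + 2 = k + 3" "Suc k + 1 = k + 2" by simp_all
      have e: "stepL p (Suc k) = (\<lambda>(A, z::int). map (\<lambda>i. let j = z + ((int i - z) mod int (k + 3))
               in A ! nat (j mod int (k + 2)) @ [of_int j * p (k + 2)]) [0..<k + 3])"
        unfolding stepL_def e1 ..
      show ?thesis unfolding \<open>m = Suc l\<close> Suc
        by (simp only: tess_vertices.simps tv.simps ih e)
    qed
  qed
qed

definition av :: "real list list \<Rightarrow> nat \<Rightarrow> (real,'n::{finite,linorder}) vec" where
  "av V c = emb (V ! c)"

definition jj :: "nat \<Rightarrow> int \<Rightarrow> nat \<Rightarrow> int" where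
  "jj n z c = z + int (tau n z c)"

lemma tau_image: "0 < n \<Longrightarrow> tau n z ` {..<n} = {..<n}"
proof
  assume n: "0 < n"
  show "tau n z ` {..<n} \<subseteq> {..<n}" using tau_lt[OF n] by auto
  show "{..<n} \<subseteq> tau n z ` {..<n}"
  proof
    fix k assume "k \<in> {..<n}"
    then show "k \<in> tau n z ` {..<n}"
      using tau_col[of k n z] col_lt[OF n] by (metis image_eqI lessThan_iff)
  qed
qed

lemma stepL_length: "length (stepL p l (A, z)) = Suc (Suc l)"
  by (simp add: stepL_def)

lemma stepL_nth: "c < Suc (Suc l) \<Longrightarrow>
  stepL p l (A, z) ! c = A ! col (Suc l) (jj (Suc (Suc l)) z c) @ [of_int (jj (Suc (Suc l)) z c) * p (Suc l)]"
  by (simp add: stepL_def jj_def tau_def col_def Let_def del: upt_Suc)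

lemma stepL_set: "set (stepL p l (A, z)) = {stepL p l (A, z) ! c | c. c < Suc (Suc l)}"
  by (auto simp: set_conv_nth stepL_length)

lemma av_stepL:
  assumes "length A = Suc l" "\<forall>v\<in>set A. length v = l" "l < CARD('n::{finite,linorder})" "c < Suc (Suc l)"
  shows "(av (stepL p l (A, z)) c :: (real,'n) vec) = BB l (p (Suc l)) (av A) (jj (Suc (Suc l)) z c)"
proof -
  have "A ! col (Suc l) (jj (Suc (Suc l)) z c) \<in> set A"
    using assms(1) col_lt[of "Suc l"] by auto
  then have len: "length (A ! col (Suc l) (jj (Suc (Suc l)) z c)) = l" using assms(2) by blast
  show ?thesis
    using assms(3,4) len by (simp add: av_def stepL_nth emb_snoc BB_def)
qed

lemma vset_stepL:
  assumes "length A = Suc l" "\<forall>v\<in>set A. length v = l" "l < CARD('n::{finite,linorder})"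
  shows "(av (stepL p l (A, z)) ` {..<Suc (Suc l)} :: (real,'n) vec set)
     = (\<lambda>k. BB l (p (Suc l)) (av A) (z + int k)) ` {..Suc l}"
proof -
  have "(av (stepL p l (A, z)) ` {..<Suc (Suc l)} :: (real,'n) vec set)
     = (\<lambda>c. BB l (p (Suc l)) (av A) (z + int (tau (Suc (Suc l)) z c))) ` {..<Suc (Suc l)}"
    using av_stepL[OF assms] by (auto simp: jj_def)
  also have "\<dots> = (\<lambda>k. BB l (p (Suc l)) (av A) (z + int k)) ` (tau (Suc (Suc l)) z ` {..<Suc (Suc l)})"
    by (simp add: image_image)
  also have "\<dots> = (\<lambda>k. BB l (p (Suc l)) (av A) (z + int k)) ` {..Suc l}"
    using tau_image[of "Suc (Suc l)" z] by (simp add: lessThan_Suc_atMost)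
  finally show ?thesis .
qed

lemma col_jj: "c < n \<Longrightarrow> col n (jj n z c) = c"
  by (simp add: jj_def col_tau)

definition LV :: "(nat \<Rightarrow> real) \<Rightarrow> nat \<Rightarrow> 'n::{finite,linorder} itself \<Rightarrow> bool" where
  "LV p m (T::'n itself) \<longleftrightarrow>
    (\<forall>V\<in>tv p m. length V = Suc m \<and> (\<forall>v\<in>set V. length v = m) \<and> colassm m (av V :: nat \<Rightarrow> (real,'n) vec))
   \<and> (\<forall>V\<in>tv p m. \<forall>V'\<in>tv p m. \<forall>c<Suc m. \<forall>c'<Suc m. (av V c :: (real,'n) vec) = av V' c' \<longrightarrow> c = c')
   \<and> (\<forall>x::(real,'n) vec. x \<in> EE m \<longrightarrow> (\<exists>V\<in>tv p m. x \<in> convex hull (av V ` {..<Suc m})))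
   \<and> (\<forall>V\<in>tv p m. \<forall>V'\<in>tv p m. convex hull (av V ` {..<Suc m}) \<inter> convex hull (av V' ` {..<Suc m})
        \<subseteq> convex hull (av V ` {..<Suc m} \<inter> av V' ` {..<Suc m} :: (real,'n) vec set))"

lemma tv_SucE:
  assumes "L \<in> tv p (Suc l)"
  obtains A z where "A \<in> tv p l" "L = stepL p l (A, z)"
proof -
  from assms obtain x where x: "x \<in> tv p l \<times> UNIV" "L = stepL p l x" by auto
  obtain A z where "x = (A, z)" by fastforce
  then show ?thesis using that x by auto
qed

lemma LV_0: "LV p 0 TYPE('n::{finite,linorder})"
proof -
  have a0: "(av [[]] 0 :: (real,'n) vec) = 0" by (simp add: av_def emb_def vec_eq_iff)
  have e0: "x \<in> EE 0 \<Longrightarrow> x = (0::(real,'n) vec)" for x by (simp add: EE_def vec_eq_iff)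
  have u: "{..<Suc 0} = {0::nat}" by auto
  have ca: "colassm 0 (av [[]] :: nat \<Rightarrow> (real,'n) vec)"
    using a0 unfolding colassm_def u by (auto simp: EE_def)
  show ?thesis unfolding LV_def using ca a0 e0 by (auto simp: hull_inc)
qed

lemma LV_Suc:
  assumes IH: "LV p l TYPE('n::{finite,linorder})" and l: "l < CARD('n)" and q: "p (Suc l) \<noteq> 0"
  shows "LV p (Suc l) TYPE('n)"
proof -
  let ?q = "p (Suc l)"
  have I1: "\<And>V. V \<in> tv p l \<Longrightarrow> length V = Suc l \<and> (\<forall>v\<in>set V. length v = l) \<and> colassm l (av V :: nat \<Rightarrow> (real,'n) vec)"
    and I2: "\<And>V V' c c'. V \<in> tv p l \<Longrightarrow> V' \<in> tv p l \<Longrightarrow> c < Suc l \<Longrightarrow> c' < Suc l \<Longrightarrow> (av V c :: (real,'n) vec) = av V' c' \<Longrightarrow> c = c'"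
    and I3: "\<And>x::(real,'n) vec. x \<in> EE l \<Longrightarrow> (\<exists>V\<in>tv p l. x \<in> convex hull (av V ` {..<Suc l}))"
    and I4: "\<And>V V'. V\<in>tv p l \<Longrightarrow> V'\<in>tv p l \<Longrightarrow> convex hull (av V ` {..<Suc l}) \<inter> convex hull (av V' ` {..<Suc l})
        \<subseteq> convex hull (av V ` {..<Suc l} \<inter> av V' ` {..<Suc l} :: (real,'n) vec set)"
    using IH unfolding LV_def by blast+
  have avS: "(av (stepL p l (A, z)) c :: (real,'n) vec) = BB l ?q (av A) (jj (Suc (Suc l)) z c)"
    if "A \<in> tv p l" "c < Suc (Suc l)" for A z c
    by (rule av_stepL) (use I1[OF that(1)] that l in auto)
  have crd_av: "crd l (av (stepL p l (A, z)) c :: (real,'n) vec) = of_int (jj (Suc (Suc l)) z c) * ?q"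
    if "A \<in> tv p l" "c < Suc (Suc l)" for A z c
  proof -
    have "(av (stepL p l (A, z)) c :: (real,'n) vec) = BB l ?q (av A) (jj (Suc (Suc l)) z c)"
      by (rule av_stepL) (use I1[OF that(1)] that l in auto)
    then show ?thesis using crd_BB[OF _ l] I1[OF that(1)] by simp
  qed
  have C2: "c = c'" if h: "L \<in> tv p (Suc l)" "L' \<in> tv p (Suc l)" "c < Suc (Suc l)" "c' < Suc (Suc l)"
      "(av L c :: (real,'n) vec) = av L' c'" for L L' c c'
  proof -
    obtain A z where A: "A \<in> tv p l" "L = stepL p l (A, z)" using h(1) by (rule tv_SucE)
    obtain A' z' where A': "A' \<in> tv p l" "L' = stepL p l (A', z')" using h(2) by (rule tv_SucE)
    note that = h
    have "crd l (av L c :: (real,'n) vec) = crd l (av L' c' :: (real,'n) vec)" using that(5) by simp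
    then have "of_int (jj (Suc (Suc l)) z c) * ?q = of_int (jj (Suc (Suc l)) z' c') * ?q"
      using crd_av[OF A(1) that(3), of z] crd_av[OF A'(1) that(4), of z'] A A' by simp
    then have "jj (Suc (Suc l)) z c = jj (Suc (Suc l)) z' c'" using q by simp
    then show "c = c'" using col_jj[OF that(3), of z] col_jj[OF that(4), of z'] by metis
  qed
  have vs: "(av (stepL p l (A, z)) ` {..<Suc (Suc l)} :: (real,'n) vec set)
     = (\<lambda>k. BB l ?q (av A) (z + int k)) ` {..Suc l}" if "A \<in> tv p l" for A z
    using vset_stepL[of A l] I1[OF that] l by simp
  have C1: "length L = Suc (Suc l) \<and> (\<forall>v\<in>set L. length v = Suc l) \<and> colassm (Suc l) (av L :: nat \<Rightarrow> (real,'n) vec)"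
    if hL: "L \<in> tv p (Suc l)" for L
  proof -
    obtain A z where A: "A \<in> tv p l" "L = stepL p l (A, z)" using hL by (rule tv_SucE)
    note that = hL
    note IA = I1[OF A(1)]
    have len: "length L = Suc (Suc l)" using A by (simp add: stepL_length)
    have lens: "\<forall>v\<in>set L. length v = Suc l"
    proof
      fix v assume "v \<in> set L"
      then obtain c where c: "c < Suc (Suc l)" "v = L ! c" using len by (auto simp: in_set_conv_nth)
      have "A ! col (Suc l) (jj (Suc (Suc l)) z c) \<in> set A" using IA col_lt[of "Suc l"] by auto
      then show "length v = Suc l" using IA c A by (simp add: stepL_nth)
    qed
    have EEc: "(av L c :: (real,'n) vec) \<in> EE (Suc l)" if "c < Suc (Suc l)" for c
    proof -
      have "(av A (col (Suc l) (jj (Suc (Suc l)) z c)) :: (real,'n) vec) \<in> EE l"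
        using IA col_lt[of "Suc l"] by (auto simp: colassm_def)
      then show ?thesis using avS[OF A(1) that] IA l that A ev_EE[of l]
        by (auto simp: BB_def intro!: EE_add EE_scale elim: EE_mono)
    qed
    have inj: "inj_on (av L :: nat \<Rightarrow> (real,'n) vec) {..<Suc (Suc l)}"
      using C2[OF that that] by (auto simp: inj_on_def)
    have ind: "\<not> affine_dependent (av L ` {..<Suc (Suc l)} :: (real,'n) vec set)"
    proof -
      have "\<not> affine_dependent ((\<lambda>k. BB l ?q (av A :: nat \<Rightarrow> (real,'n) vec) (z + int k)) ` {..Suc l})"
        by (rule col_indep) (use IA l q in auto)
      then show ?thesis using vs[OF A(1), of z] A by simp
    qed
    show ?thesis using len lens EEc inj ind by (auto simp: colassm_def)
  qed
  have C3: "\<exists>L\<in>tv p (Suc l). x \<in> convex hull (av L ` {..<Suc (Suc l)})" if x: "(x::(real,'n) vec) \<in> EE (Suc l)" for x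
  proof -
    have dec: "x = prj l x + crd l x *\<^sub>R ev l" "prj l x \<in> EE l" using EE_decomp[OF l x] by auto
    obtain A where A: "A \<in> tv p l" "prj l x \<in> convex hull (av A ` {..<Suc l})" using I3[OF dec(2)] by blast
    note IA = I1[OF A(1)]
    have inj: "inj_on (av A :: nat \<Rightarrow> (real,'n) vec) {..<Suc l}" using IA by (simp add: colassm_def)
    obtain lam0 where l0: "\<forall>c\<in>{..<Suc l}. 0 \<le> lam0 c" "sum lam0 {..<Suc l} = 1"
      "(\<Sum>c<Suc l. lam0 c *\<^sub>R av A c) = prj l x"
      using A(2) conv_idx[of "{..<Suc l}" "av A" "prj l x"] inj by auto
    define lam where "lam c = (if c < Suc l then lam0 c else 0)" for c
    have lam: "\<forall>c. 0 \<le> lam c" "(\<Sum>c<Suc l. lam c) = 1" "(\<Sum>c<Suc l. lam c *\<^sub>R av A c) = prj l x"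
      using l0 by (auto simp: lam_def)
    obtain z where z: "TT (Suc l) lam z \<le> crd l x / ?q" "crd l x / ?q \<le> TT (Suc l) lam (z + 1)"
      using TT_exists[OF lam(1,2)] by blast
    have "(\<Sum>c<Suc l. lam c *\<^sub>R av A c) + (crd l x / ?q * ?q) *\<^sub>R ev l \<in>
      convex hull ((\<lambda>k. BB l ?q (av A :: nat \<Rightarrow> (real,'n) vec) (z + int k)) ` {..Suc l}
                \<inter> (\<lambda>k. BB l ?q (av A) (z + int k)) ` {..Suc l})"
      by (rule col_meet[OF _ l q lam(1,2) _ order_refl z z]) (use IA in auto)
    then have "x \<in> convex hull (av (stepL p l (A, z)) ` {..<Suc (Suc l)})"
      using lam(3) dec(1) q vs[OF A(1), of z] by simp
    moreover have "stepL p l (A, z) \<in> tv p (Suc l)" using A(1) by auto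
    ultimately show ?thesis by blast
  qed
  have C4a: "x \<in> convex hull (av L ` {..<Suc (Suc l)} \<inter> av L' ` {..<Suc (Suc l)} :: (real,'n) vec set)"
    if A: "A \<in> tv p l" "L = stepL p l (A, z)" and A': "A' \<in> tv p l" "L' = stepL p l (A', z')"
      and zz: "z \<le> z'"
      and x: "x \<in> convex hull (av L ` {..<Suc (Suc l)})" "x \<in> convex hull (av L' ` {..<Suc (Suc l)})"
    for A A' L L' z z' and x :: "(real,'n) vec"
  proof -
    note IA = I1[OF A(1)] and IA' = I1[OF A'(1)]
    have xa: "x \<in> convex hull ((\<lambda>k. BB l ?q (av A) (z + int k)) ` {..Suc l})" using x(1) vs[OF A(1)] A(2) by simp
    have xa': "x \<in> convex hull ((\<lambda>k. BB l ?q (av A') (z' + int k)) ` {..Suc l})" using x(2) vs[OF A'(1)] A'(2) by simp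
    obtain lam where lam: "\<forall>c. 0 \<le> lam c" "(\<Sum>c<Suc l. lam c) = 1" "prj l x = (\<Sum>c<Suc l. lam c *\<^sub>R av A c)"
      "TT (Suc l) lam z \<le> crd l x / ?q" "crd l x / ?q \<le> TT (Suc l) lam (z+1)"
      using col_C1[OF _ l q xa] IA by blast
    obtain lam' where lam': "\<forall>c. 0 \<le> lam' c" "(\<Sum>c<Suc l. lam' c) = 1" "prj l x = (\<Sum>c<Suc l. lam' c *\<^sub>R av A' c)"
      "TT (Suc l) lam' z' \<le> crd l x / ?q" "crd l x / ?q \<le> TT (Suc l) lam' (z'+1)"
      using col_C1[OF _ l q xa'] IA' by blast
    have "prj l x \<in> convex hull (av A ` {..<Suc l})"
      using conv_idx[of "{..<Suc l}" "av A" "prj l x"] IA lam by (auto simp: colassm_def)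
    moreover have "prj l x \<in> convex hull (av A' ` {..<Suc l})"
      using conv_idx[of "{..<Suc l}" "av A'" "prj l x"] IA' lam' by (auto simp: colassm_def)
    ultimately have py: "prj l x \<in> convex hull (av A ` {..<Suc l} \<inter> av A' ` {..<Suc l})"
      using I4[OF A(1) A'(1)] by blast
    have mt: "\<forall>c<Suc l. lam c = lam' c \<and> (lam c \<noteq> 0 \<longrightarrow> av A c = (av A' c :: (real,'n) vec))"
      by (rule match_bary[OF _ _ _ _ _ lam(2) lam'(2) lam(3) lam'(3) py])
         (use IA IA' I2[OF A(1) A'(1)] in \<open>auto simp: colassm_def\<close>)
    have tt: "TT (Suc l) lam' z' = TT (Suc l) lam z'" "TT (Suc l) lam' (z'+1) = TT (Suc l) lam (z'+1)"
      using TT_cong[of "Suc l" lam' lam] mt by auto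
    have "(\<Sum>c<Suc l. lam c *\<^sub>R av A c) + (crd l x / ?q * ?q) *\<^sub>R ev l \<in>
      convex hull ((\<lambda>k. BB l ?q (av A :: nat \<Rightarrow> (real,'n) vec) (z + int k)) ` {..Suc l}
                \<inter> (\<lambda>k. BB l ?q (av A') (z' + int k)) ` {..Suc l})"
      by (rule col_meet[OF _ l q lam(1,2) _ zz lam(4,5)]) (use IA mt lam'(4,5) tt in auto)
    moreover have "x = prj l x + crd l x *\<^sub>R ev l"
    proof -
      have "x \<in> EE (Suc l)"
      proof -
        have "(av L ` {..<Suc (Suc l)} :: (real,'n) vec set) \<subseteq> EE (Suc l)" using C1[of L] A by (auto simp: colassm_def)
        moreover have "convex (EE (Suc l) :: (real,'n) vec set)"
          by (auto simp: convex_def EE_def)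
        ultimately show ?thesis using x(1) by (meson convex_hull_subset hull_subset subsetD subset_hull)
      qed
      then show ?thesis using EE_decomp[OF l] by blast
    qed
    ultimately show ?thesis using lam(3) q vs[OF A(1)] vs[OF A'(1)] A(2) A'(2) by simp
  qed
  have C4: "convex hull (av L ` {..<Suc (Suc l)} :: (real,'n) vec set) \<inter> convex hull (av L' ` {..<Suc (Suc l)})
        \<subseteq> convex hull (av L ` {..<Suc (Suc l)} \<inter> av L' ` {..<Suc (Suc l)} :: (real,'n) vec set)"
    if hh: "L \<in> tv p (Suc l)" "L' \<in> tv p (Suc l)" for L L'
  proof
    fix x :: "(real,'n) vec" assume x: "x \<in> convex hull (av L ` {..<Suc (Suc l)}) \<inter> convex hull (av L' ` {..<Suc (Suc l)})"
    obtain A z where A: "A \<in> tv p l" "L = stepL p l (A, z)" using hh(1) by (rule tv_SucE)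
    obtain A' z' where A': "A' \<in> tv p l" "L' = stepL p l (A', z')" using hh(2) by (rule tv_SucE)
    show "x \<in> convex hull (av L ` {..<Suc (Suc l)} \<inter> av L' ` {..<Suc (Suc l)})"
    proof (cases "z \<le> z'")
      case True
      then show ?thesis using C4a[OF A A' True] x by blast
    next
      case False
      then have "x \<in> convex hull (av L' ` {..<Suc (Suc l)} \<inter> av L ` {..<Suc (Suc l)})"
        using C4a[OF A' A] x by auto
      then show ?thesis by (simp add: Int_commute)
    qed
  qed
  show ?thesis unfolding LV_def using C1 C2 C3 C4 by blast
qed

lemma LV_all: "m \<le> CARD('n::{finite,linorder}) \<Longrightarrow> \<forall>i\<in>{1..m}. p i \<noteq> 0 \<Longrightarrow> LV p m TYPE('n)"
proof (induction m)
  case 0 show ?case by (rule LV_0)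
next
  case (Suc l)
  have "LV p l TYPE('n)" using Suc by auto
  moreover have "l < CARD('n)" "p (Suc l) \<noteq> 0" using Suc.prems by auto
  ultimately show ?case by (rule LV_Suc)
qed

lemma set_map_vec:
  assumes "length V = Suc CARD('d::{finite,linorder})" "\<forall>v\<in>set V. length v = CARD('d)"
  shows "set (map vec_of_list V) = (av V ` {..<Suc CARD('d)} :: (real,'d) vec set)"
proof -
  have "set (map vec_of_list V) = (vec_of_list ` set V :: (real,'d) vec set)" by simp
  also have "set V = (\<lambda>c. V ! c) ` {..<Suc CARD('d)}"
    using assms(1) by (auto simp: in_set_conv_nth image_iff)
  also have "(vec_of_list ` ((\<lambda>c. V ! c) ` {..<Suc CARD('d)}) :: (real,'d) vec set) = av V ` {..<Suc CARD('d)}"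
  proof -
    have "(vec_of_list (V ! c) :: (real,'d) vec) = av V c" if "c < Suc CARD('d)" for c
    proof -
      have "(emb (V ! c) :: (real,'d) vec) = vec_of_list (V ! c)" by (rule emb_vec) (use assms that in auto)
      then show ?thesis by (simp add: av_def)
    qed
    then show ?thesis by (auto simp: image_iff)
  qed
  finally show ?thesis .
qed

lemma tess_char:
  assumes p: "\<forall>i\<in>{1..CARD('d::{finite,linorder})}. p i \<noteq> 0"
  shows "(tess p :: (real,'d) vec set set) = (\<lambda>V. convex hull (av V ` {..<Suc CARD('d)})) ` tv p CARD('d)"
proof -
  have LV: "LV p CARD('d) TYPE('d)" by (rule LV_all) (use p in auto)
  have tt: "tess_vertices p CARD('d) = tv p CARD('d)" by (rule tess_vertices_tv) simp
  have e: "set (map vec_of_list V) = (av V ` {..<Suc CARD('d)} :: (real,'d) vec set)" if "V \<in> tv p CARD('d)" for V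
    by (rule set_map_vec) (use LV that in \<open>auto simp: LV_def\<close>)
  show ?thesis unfolding tess_def tt using e by (auto simp: image_iff)
qed

lemma geo:
  fixes p :: "nat \<Rightarrow> real"
  assumes p: "\<forall>i\<in>{1..CARD('d::{finite,linorder})}. p i \<noteq> 0"
  shows "simplicial_tessellation (tess p :: (real,'d) vec set set)
     \<and> (\<forall>F. F \<subseteq> (tess p :: (real,'d) vec set set) \<longrightarrow> face_to_face_mesh F)"
proof -
  let ?d = "CARD('d)"
  let ?vs = "\<lambda>V. av V ` {..<Suc ?d} :: (real,'d) vec set"
  have LV: "LV p ?d TYPE('d)" by (rule LV_all) (use p in auto)
  have L1: "\<And>V. V \<in> tv p ?d \<Longrightarrow> colassm ?d (av V :: nat \<Rightarrow> (real,'d) vec)"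
    and L3: "\<And>x::(real,'d) vec. x \<in> EE ?d \<Longrightarrow> (\<exists>V\<in>tv p ?d. x \<in> convex hull (?vs V))"
    and L4: "\<And>V V'. V\<in>tv p ?d \<Longrightarrow> V'\<in>tv p ?d \<Longrightarrow> convex hull (?vs V) \<inter> convex hull (?vs V')
        \<subseteq> convex hull (?vs V \<inter> ?vs V')"
    using LV unfolding LV_def by blast+
  have T: "(tess p :: (real,'d) vec set set) = (\<lambda>V. convex hull (?vs V)) ` tv p ?d"
    by (rule tess_char[OF p])
  have card: "card (?vs V) = Suc ?d" if "V \<in> tv p ?d" for V
    using L1[OF that] by (simp add: colassm_def card_image)
  have ind: "\<not> affine_dependent (?vs V)" if "V \<in> tv p ?d" for V
    using L1[OF that] by (simp add: colassm_def)
  have meet: "convex hull (?vs V) \<inter> convex hull (?vs V') = convex hull (?vs V \<inter> ?vs V')"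
    if "V \<in> tv p ?d" "V' \<in> tv p ?d" for V V'
    using L4[OF that] hull_mono[of "?vs V \<inter> ?vs V'" "?vs V"] hull_mono[of "?vs V \<inter> ?vs V'" "?vs V'"] by blast
  have smp: "int DIM((real,'d) vec) simplex K" if hK: "K \<in> tess p" for K :: "(real,'d) vec set"
  proof -
    obtain V where V: "V \<in> tv p ?d" "K = convex hull (?vs V)" using hK T by auto
    show ?thesis using simplex_convex_hull[of "?vs V" "int DIM((real,'d) vec)"] card[OF V(1)] ind[OF V(1)] V(2)
      by simp
  qed
  have cover: "\<Union>(tess p :: (real,'d) vec set set) = UNIV"
  proof -
    have "x \<in> \<Union>(tess p :: (real,'d) vec set set)" for x :: "(real,'d) vec"
    proof -
      have "x \<in> EE ?d" using ix_less by (auto simp: EE_def not_le[symmetric])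
      then obtain V where "V \<in> tv p ?d" "x \<in> convex hull (?vs V)" using L3 by blast
      then show ?thesis using T by auto
    qed
    then show ?thesis by auto
  qed
  have int: "interior K \<inter> interior K' = {}" if hK: "K \<in> tess p" "K' \<in> tess p" "K \<noteq> K'" for K K' :: "(real,'d) vec set"
  proof -
    obtain V where V: "V \<in> tv p ?d" "K = convex hull (?vs V)" using hK T by auto
    obtain V' where V': "V' \<in> tv p ?d" "K' = convex hull (?vs V')" using hK T by auto
    let ?S = "?vs V \<inter> ?vs V'"
    have "?S \<noteq> ?vs V"
    proof
      assume "?S = ?vs V"
      then have "?vs V \<subseteq> ?vs V'" by blast
      then have "?vs V = ?vs V'" using card[OF V(1)] card[OF V'(1)] by (simp add: card_subset_eq)
      then show False using V V' hK(3) by simp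
    qed
    then have "card ?S < card (?vs V)" by (intro psubset_card_mono) auto
    then have cS: "card ?S < Suc ?d" using card[OF V(1)] by simp
    have indS: "\<not> affine_dependent ?S" using ind[OF V(1)] affine_dependent_subset by blast
    have "interior (convex hull ?S) = {}"
    proof (rule ccontr)
      assume "interior (convex hull ?S) \<noteq> {}"
      then have "aff_dim (convex hull ?S) = int ?d" using aff_dim_nonempty_interior by fastforce
      then have "aff_dim ?S = int ?d" by (simp add: aff_dim_convex_hull)
      then show False using aff_dim_affine_independent[OF indS] cS by linarith
    qed
    then show ?thesis using meet[OF V(1) V'(1)] V(2) V'(2) by (simp flip: interior_Int)
  qed
  have f2f: "face_to_face_mesh F" if hF: "F \<subseteq> tess p" for F :: "(real,'d) vec set set"
    unfolding face_to_face_mesh_def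
  proof (intro ballI disjI2 conjI)
    fix K K' :: "(real,'d) vec set" assume K: "K \<in> F" "K' \<in> F"
    obtain V where V: "V \<in> tv p ?d" "K = convex hull (?vs V)" using hF K T by auto
    obtain V' where V': "V' \<in> tv p ?d" "K' = convex hull (?vs V')" using hF K T by auto
    have e: "K \<inter> K' = convex hull (?vs V \<inter> ?vs V')" unfolding V(2) V'(2) by (rule meet[OF V(1) V'(1)])
    show "K \<inter> K' face_of K" unfolding e unfolding V(2)
      by (rule face_of_convex_hull_affine_independent[OF ind[OF V(1)], THEN iffD2]) (rule exI[of _ "?vs V \<inter> ?vs V'"], simp)
    show "K \<inter> K' face_of K'" unfolding e unfolding V'(2)
      by (rule face_of_convex_hull_affine_independent[OF ind[OF V'(1)], THEN iffD2]) (rule exI[of _ "?vs V \<inter> ?vs V'"], simp)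
  qed
  have "simplicial_tessellation (tess p :: (real,'d) vec set set)"
    unfolding simplicial_tessellation_def
  proof (intro conjI ballI impI)
    show "\<And>K::(real,'d) vec set. K \<in> tess p \<Longrightarrow> int DIM((real, 'd) vec) simplex K" by (rule smp)
    show "\<Union>(tess p) = (UNIV :: (real,'d) vec set)" by (rule cover)
    show "\<And>K K' :: (real,'d) vec set. K \<in> tess p \<Longrightarrow> K' \<in> tess p \<Longrightarrow> K \<noteq> K' \<Longrightarrow> interior K \<inter> interior K' = {}"
      by (rule int)
  qed
  then show ?thesis using f2f by simp
qed

typedef ('a::"{finite,linorder}") wo = "UNIV :: 'a set" by simp

instantiation wo :: ("{finite,linorder}") linorder
begin
definition less_eq_wo :: "'a wo \<Rightarrow> 'a wo \<Rightarrow> bool" where "less_eq_wo x y \<longleftrightarrow> Rep_wo x \<le> Rep_wo y"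
definition less_wo :: "'a wo \<Rightarrow> 'a wo \<Rightarrow> bool" where "less_wo x y \<longleftrightarrow> Rep_wo x < Rep_wo y"
instance
  by standard (auto simp: less_eq_wo_def less_wo_def Rep_wo_inject[symmetric] less_le_not_le)
end

instance wo :: ("{finite,linorder}") finite
proof
  have "(UNIV :: 'a wo set) = Abs_wo ` UNIV"
    by (metis Rep_wo_inverse surj_def)
  moreover have "finite (range (Abs_wo :: 'a \<Rightarrow> 'a wo))" by (rule finite_imageI) simp
  ultimately show "finite (UNIV :: 'a wo set)" by simp
qed

instance wo :: ("{finite,linorder}") wellorder
proof
  fix P :: "'a wo \<Rightarrow> bool" and a :: "'a wo"
  assume H: "\<And>x. (\<And>y. y < x \<Longrightarrow> P y) \<Longrightarrow> P x"
  show "P a"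
  proof (induction a rule: measure_induct_rule[of "\<lambda>x. ix (Rep_wo x)"])
    case (less x)
    show ?case
    proof (rule H)
      fix y assume "y < x"
      then have "ix (Rep_wo y) < ix (Rep_wo x)" by (simp add: less_wo_def ix_mono)
      then show "P y" by (rule less)
    qed
  qed
qed

lemma card_wo: "CARD('a::{finite,linorder} wo) = CARD('a)"
  using type_definition.card[OF type_definition_wo] by simp

lemma ix_wo: "ix (x :: 'a::{finite,linorder} wo) = ix (Rep_wo x)"
proof -
  have "{j. j < x} = Abs_wo ` {j. j < Rep_wo x}"
    by (auto simp: less_wo_def image_iff Abs_wo_inverse) (metis Rep_wo_inverse)
  moreover have "inj_on Abs_wo {j :: 'a. j < Rep_wo x}"
    by (simp add: Abs_wo_inject inj_on_def)
  ultimately show ?thesis by (simp add: ix_def card_image)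
qed

definition phi :: "(real,'a::{finite,linorder}) vec \<Rightarrow> (real,'a wo) vec" where
  "phi x = (\<chi> i. x $ Rep_wo i)"

definition psi :: "(real,'a::{finite,linorder} wo) vec \<Rightarrow> (real,'a) vec" where
  "psi y = (\<chi> i. y $ Abs_wo i)"

lemma phi_psi: "phi (psi y) = y" and psi_phi: "psi (phi x) = x"
  by (auto simp: phi_def psi_def vec_eq_iff Rep_wo_inverse Abs_wo_inverse)

lemma linear_phi: "linear phi"
  by (auto simp: linear_iff phi_def vec_eq_iff)

lemma linear_psi: "linear psi"
  by (auto simp: linear_iff psi_def vec_eq_iff)

lemma phi_emb: "phi (emb xs :: (real,'a::{finite,linorder}) vec) = (emb xs :: (real,'a wo) vec)"
  by (auto simp: phi_def emb_def vec_eq_iff ix_wo)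

lemma prod_Basis_cart:
  "(\<Prod>b\<in>(Basis :: (real,'a::finite) vec set). f b) = (\<Prod>i\<in>UNIV. f (axis i 1))"
proof -
  have inj: "inj (\<lambda>i::'a. axis i (1::real))" by (auto simp: inj_def axis_eq_axis)
  have B: "(Basis :: (real,'a) vec set) = range (\<lambda>i. axis i 1)" by (auto simp: Basis_vec_def)
  show ?thesis unfolding B by (subst prod.reindex[OF inj]) simp
qed

lemma phi_meas: "phi \<in> borel_measurable (lborel :: (real,'a::{finite,linorder}) vec measure)"
proof -
  have "bounded_linear (phi :: (real,'a) vec \<Rightarrow> _)" using linear_phi linear_conv_bounded_linear by blast
  then have "continuous_on UNIV (phi :: (real,'a) vec \<Rightarrow> _)" by (rule linear_continuous_on)
  then have "phi \<in> borel_measurable (borel :: (real,'a) vec measure)" by (rule borel_measurable_continuous_onI)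
  then show ?thesis by simp
qed

lemma phi_cont: "continuous_on S (phi :: (real,'a::{finite,linorder}) vec \<Rightarrow> _)"
proof -
  have "bounded_linear (phi :: (real,'a) vec \<Rightarrow> _)" using linear_phi linear_conv_bounded_linear by blast
  then show ?thesis by (rule linear_continuous_on)
qed

lemma lborel_wo: "(lborel :: (real,'a::{finite,linorder} wo) vec measure) = distr lborel borel phi"
proof (rule lborel_eqI)
  show "sets (distr lborel borel phi) = sets (borel :: (real,'a wo) vec measure)" by simp
  fix l u :: "(real,'a wo) vec"
  assume lu: "\<And>b. b \<in> Basis \<Longrightarrow> l \<bullet> b \<le> u \<bullet> b"
  note mphi = phi_meas
  have pre: "phi -` box l u = box (psi l) (psi u)"
  proof -
    have "phi x \<in> box l u \<longleftrightarrow> x \<in> box (psi l) (psi u)" for x :: "(real,'a) vec"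
    proof -
      have "phi x \<in> box l u \<longleftrightarrow> (\<forall>i::'a wo. l $ i < x $ Rep_wo i \<and> x $ Rep_wo i < u $ i)"
        by (simp add: mem_box_cart phi_def)
      also have "\<dots> \<longleftrightarrow> (\<forall>i::'a. l $ Abs_wo i < x $ i \<and> x $ i < u $ Abs_wo i)"
        by (metis Abs_wo_inverse Rep_wo_inverse UNIV_I)
      also have "\<dots> \<longleftrightarrow> x \<in> box (psi l) (psi u)" by (simp add: mem_box_cart psi_def)
      finally show ?thesis .
    qed
    then show ?thesis by auto
  qed
  have "emeasure (distr lborel borel phi) (box l u) = emeasure lborel (box (psi l) (psi u))"
    by (simp add: emeasure_distr[OF mphi] pre)
  also have "\<dots> = (\<Prod>b\<in>Basis. (psi u - psi l) \<bullet> b)"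
  proof (rule emeasure_lborel_box)
    fix b :: "(real,'a) vec" assume "b \<in> Basis"
    then obtain i where b: "b = axis i 1" by (auto simp: Basis_vec_def)
    have "l \<bullet> axis (Abs_wo i) 1 \<le> u \<bullet> axis (Abs_wo i) 1" by (rule lu) (auto simp: Basis_vec_def)
    then have "l $ Abs_wo i \<le> u $ Abs_wo i" by (simp add: inner_axis)
    then show "psi l \<bullet> b \<le> psi u \<bullet> b" by (simp add: b inner_axis psi_def)
  qed
  also have "\<dots> = (\<Prod>i\<in>UNIV. u $ Abs_wo i - l $ Abs_wo i)"
    by (simp add: prod_Basis_cart inner_axis psi_def)
  also have "\<dots> = (\<Prod>j\<in>UNIV. u $ j - l $ j)"
  proof -
    have "(\<Prod>i\<in>UNIV. u $ Abs_wo i - l $ Abs_wo i) = (\<Prod>j\<in>UNIV. u $ j - l $ j)"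
      by (rule prod.reindex_bij_witness[of _ Rep_wo Abs_wo]) (auto simp: Abs_wo_inverse Rep_wo_inverse)
    then show ?thesis by simp
  qed
  also have "\<dots> = (\<Prod>b\<in>Basis. (u - l) \<bullet> b)"
    by (simp add: prod_Basis_cart inner_axis)
  finally show "emeasure (distr lborel borel phi) (box l u) = (\<Prod>b\<in>Basis. (u - l) \<bullet> b)" .
qed

lemma measure_phi:
  assumes "compact (S :: (real,'a::{finite,linorder}) vec set)"
  shows "measure lebesgue (phi ` S) = measure lebesgue S"
proof -
  note mphi = phi_meas[where 'a='a]
  have cpt: "compact (phi ` S)"
    by (rule compact_continuous_image[OF phi_cont assms])
  have "measure lebesgue (phi ` S) = measure lborel (phi ` S)"
    using cpt by (simp add: compact_imp_closed borel_closed)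
  also have "\<dots> = measure (distr lborel borel phi) (phi ` S)" by (simp add: lborel_wo[symmetric])
  also have "\<dots> = measure lborel (phi -` (phi ` S) \<inter> space lborel)"
    unfolding measure_def using cpt by (simp add: emeasure_distr[OF mphi] compact_imp_closed borel_closed)
  also have "phi -` (phi ` S) \<inter> space lborel = S"
    by (auto simp: image_iff) (metis psi_phi)
  also have "measure lborel S = measure lebesgue S"
    using assms by (simp add: compact_imp_closed borel_closed)
  finally show ?thesis .
qed

lemma hull_affine_image:
  fixes G :: "(real,'w::finite) vec \<Rightarrow> (real,'w) vec"
  assumes "linear G"
  shows "convex hull ((\<lambda>y. b + G (y - a)) ` X) = (\<lambda>x. b + x) ` (G ` ((\<lambda>x. - a + x) ` (convex hull X)))"
proof -
  have "(\<lambda>y. b + G (y - a)) ` X = (\<lambda>x. b + x) ` (G ` ((\<lambda>x. - a + x) ` X))"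
    by (auto simp: image_image)
  then show ?thesis
    by (simp only: convex_hull_translation convex_hull_linear_image[OF assms, symmetric])
qed

lemma meas_affine:
  fixes G :: "(real,'w::{finite,wellorder}) vec \<Rightarrow> (real,'w) vec"
  assumes G: "linear G" and X: "finite X"
  shows "measure lebesgue (convex hull ((\<lambda>y. b + G (y - a)) ` X)) = \<bar>det (matrix G)\<bar> * measure lebesgue (convex hull X)"
proof -
  have c: "compact ((\<lambda>x. - a + x) ` (convex hull X))"
    by (rule compact_translation[OF finite_imp_compact_convex_hull[OF X]])
  have "measure lebesgue (convex hull ((\<lambda>y. b + G (y - a)) ` X))
      = measure lebesgue (G ` ((\<lambda>x. - a + x) ` (convex hull X)))"
    unfolding hull_affine_image[OF G] by (rule measure_translation)
  also have "\<dots> = \<bar>det (matrix G)\<bar> * measure lebesgue ((\<lambda>x. - a + x) ` (convex hull X))"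
    by (rule measure_linear_image[OF G lmeasurable_compact[OF c]])
  also have "measure lebesgue ((\<lambda>x. - a + x) ` (convex hull X)) = measure lebesgue (convex hull X)"
    by (rule measure_translation)
  finally show ?thesis .
qed

lemma ev_ix: "ev (ix j) = (axis j 1 :: (real,'n::{finite,linorder}) vec)"
  by (auto simp: ev_def axis_def vec_eq_iff ix_inj)

lemma ev_comp: "(ev k :: (real,'n::{finite,linorder}) vec) $ i = (if ix i = k then 1 else 0)"
  by (simp add: ev_def)

lemma sum_ev_ge: "k < CARD('n::{finite,linorder}) \<Longrightarrow> m \<le> k \<Longrightarrow>
   (\<Sum>i | m \<le> ix i. (ev k :: (real,'n) vec) $ i) = 1"
proof -
  assume k: "k < CARD('n)" "m \<le> k"
  obtain i0 :: 'n where i0: "ix i0 = k" using ix_surj[OF k(1)] by blast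
  have "(\<Sum>i | m \<le> ix i. (ev k :: (real,'n) vec) $ i) = (\<Sum>i\<in>{i0}. (ev k :: (real,'n) vec) $ i)"
    by (rule sum.mono_neutral_right) (use i0 k in \<open>auto simp: ev_comp ix_inj\<close>)
  then show ?thesis using i0 by (simp add: ev_comp)
qed

lemma shear:
  fixes X :: "(real,'w::{finite,wellorder}) vec set"
  assumes X: "finite X" "X \<subseteq> EE m" and x: "x0 \<in> EE m" "x1 \<in> EE m"
  shows "measure lebesgue (convex hull (X \<union> (\<lambda>k. x0 + ev k) ` {m..<CARD('w)}))
       = measure lebesgue (convex hull (X \<union> (\<lambda>k. x1 + ev k) ` {m..<CARD('w)}))"
proof -
  define H where "H y = y + (\<Sum>i | m \<le> ix i. y $ i) *\<^sub>R (x1 - x0)" for y :: "(real,'w) vec"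
  have lin: "linear H"
    unfolding H_def by (auto simp: linear_iff sum.distrib scaleR_add_left scaleR_add_right sum_distrib_left[symmetric] scaleR_scaleR)
  have s0: "(\<Sum>i | m \<le> ix i. y $ i) = 0" if "y \<in> EE m" for y
    using that by (auto simp: EE_def intro!: sum.neutral)
  have Hx: "H y = y" if "y \<in> EE m" for y using s0[OF that] by (simp add: H_def)
  have He: "H (x0 + ev k) = x1 + ev k" if "k \<in> {m..<CARD('w)}" for k
  proof -
    have "(\<Sum>i | m \<le> ix i. (x0 + ev k) $ i) = 1"
      using s0[OF x(1)] sum_ev_ge[where 'n='w, of k m] that by (simp add: sum.distrib)
    then show ?thesis by (simp add: H_def algebra_simps)
  qed
  have img: "(\<lambda>y. 0 + H (y - 0)) ` (X \<union> (\<lambda>k. x0 + ev k) ` {m..<CARD('w)}) = X \<union> (\<lambda>k. x1 + ev k) ` {m..<CARD('w)}"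
  proof -
    have i1: "(\<lambda>y. 0 + H (y - 0)) ` X = (\<lambda>y. y) ` X" by (rule image_cong) (use Hx X(2) in auto)
    have i2: "(\<lambda>y. 0 + H (y - 0)) ` ((\<lambda>k. x0 + ev k) ` {m..<CARD('w)}) = (\<lambda>k. x1 + ev k) ` {m..<CARD('w)}"
      unfolding image_image by (rule image_cong) (simp_all add: He)
    show ?thesis unfolding image_Un i1 i2 by simp
  qed
  have det: "det (matrix H) = 1"
  proof -
    have ent: "matrix H $ i $ j = (if i = j then 1 else 0) + (if m \<le> ix j then (x1 - x0) $ i else 0)" for i j
      by (simp add: matrix_def H_def axis_def ev_def)
    have z: "(x1 - x0) $ i = 0" if "m \<le> ix i" for i using x that by (auto simp: EE_def)
    have "det (matrix H) = (\<Prod>i\<in>UNIV. matrix H $ i $ i)"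
    proof (rule det_upperdiagonal)
      fix i j :: 'w assume "i > j"
      then show "matrix H $ i $ j = 0" using z[of i] ix_lt[of j i] by (auto simp: ent)
    qed
    also have "\<dots> = 1" by (rule prod.neutral) (use z in \<open>auto simp: ent\<close>)
    finally show ?thesis .
  qed
  show ?thesis using meas_affine[OF lin, of "X \<union> (\<lambda>k. x0 + ev k) ` {m..<CARD('w)}" 0 0] X img det by simp
qed

lemma thick_base:
  "measure lebesgue (convex hull ((av [[]] ` {..<Suc 0} :: (real,'w::{finite,wellorder}) vec set)
      \<union> (\<lambda>k. av [[]] 0 + ev k) ` {0..<CARD('w)})) = 1 / fact CARD('w)"
proof -
  have a0: "(av [[]] 0 :: (real,'w) vec) = 0" by (simp add: av_def emb_def vec_eq_iff)
  have u: "{..<Suc 0} = {0::nat}" by auto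
  have B: "(ev ` {0..<CARD('w)} :: (real,'w) vec set) = Basis"
  proof -
    have "{0..<CARD('w)} = ix ` (UNIV :: 'w set)" using ix_bij[where 'n='w] by (auto simp: bij_betw_def)
    then have "(ev ` {0..<CARD('w)} :: (real,'w) vec set) = (\<lambda>j::'w. ev (ix j)) ` UNIV" by (simp add: image_image)
    also have "\<dots> = (\<lambda>j::'w. axis j 1) ` UNIV" by (simp add: ev_ix)
    also have "\<dots> = Basis" by (auto simp: Basis_vec_def)
    finally show ?thesis .
  qed
  have e: "(av [[]] ` {..<Suc 0} :: (real,'w) vec set) \<union> (\<lambda>k. av [[]] 0 + ev k) ` {0..<CARD('w)} = insert 0 Basis"
    unfolding u using B a0 by auto
  have "compact (convex hull (insert 0 (Basis :: (real,'w) vec set)))" by (simp add: finite_imp_compact_convex_hull)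
  then have "measure lebesgue (convex hull (insert 0 (Basis :: (real,'w) vec set))) = measure lborel (convex hull (insert 0 (Basis :: (real,'w) vec set)))"
    by (simp add: compact_imp_closed borel_closed)
  then show ?thesis unfolding e by (simp add: content_std_simplex)
qed

lemma crd_ev_gen: "l < CARD('n::{finite,linorder}) \<Longrightarrow> crd l (ev k :: (real,'n) vec) = (if k = l then 1 else 0)"
proof -
  assume l: "l < CARD('n)"
  obtain i0 :: 'n where i0: "ix i0 = l" using ix_surj[OF l] by blast
  show ?thesis using crd_eq[OF i0, of "ev k"] i0 by (simp add: ev_comp)
qed

lemma prj_ev_ge: "l \<le> k \<Longrightarrow> prj l (ev k :: (real,'n::{finite,linorder}) vec) = 0"
  by (auto simp: prj_def ev_comp vec_eq_iff)

lemma linear_g_props: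
  fixes g :: "(real,'n::finite) vec \<Rightarrow> real"
  assumes "linear g"
  shows "g (x + y) = g x + g y" "g (c *\<^sub>R x) = c * g x" "g 0 = 0"
  using assms by (simp_all add: linear_add linear_scale linear_0)

lemma thick_step:
  fixes p :: "nat \<Rightarrow> real"
  assumes IHV: "LV p l TYPE('w::{finite,wellorder})" and l: "Suc l \<le> CARD('w)" and q: "p (Suc l) \<noteq> 0"
    and IH: "\<forall>V\<in>tv p l. \<forall>x0\<in>(av V ` {..<Suc l} :: (real,'w) vec set).
       measure lebesgue (convex hull (av V ` {..<Suc l} \<union> (\<lambda>k. x0 + ev k) ` {l..<CARD('w)}))
         = fact l * (\<Prod>i=1..l. \<bar>p i\<bar>) / fact CARD('w)"
    and L: "L \<in> tv p (Suc l)" and x0: "x0 \<in> (av L ` {..<Suc (Suc l)} :: (real,'w) vec set)"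
  shows "measure lebesgue (convex hull (av L ` {..<Suc (Suc l)} \<union> (\<lambda>k. x0 + ev k) ` {Suc l..<CARD('w)}))
         = fact (Suc l) * (\<Prod>i=1..Suc l. \<bar>p i\<bar>) / fact CARD('w)"
proof -
  let ?n = "Suc l" and ?q = "p (Suc l)" and ?D = "CARD('w)"
  have lD: "l < ?D" using l by simp
  obtain A z where A: "A \<in> tv p l" "L = stepL p l (A, z)" using L by (rule tv_SucE)
  define a :: "nat \<Rightarrow> (real,'w) vec" where "a = av A"
  define az where "az = a (col ?n z)"
  define Bz where "Bz = BB l ?q a z"
  have IA: "length A = Suc l" "\<forall>v\<in>set A. length v = l" "colassm l a"
    using IHV A(1) unfolding LV_def a_def by auto
  have LVS: "LV p (Suc l) TYPE('w)" by (rule LV_Suc[OF IHV lD q])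
  have caL: "colassm (Suc l) (av L :: nat \<Rightarrow> (real,'w) vec)" using LVS L unfolding LV_def by auto
  have vsL: "(av L ` {..<Suc ?n} :: (real,'w) vec set) = (\<lambda>k. BB l ?q a (z + int k)) ` {..?n}"
    unfolding A(2) a_def by (rule vset_stepL) (use IA lD in \<open>auto simp: a_def\<close>)
  have aE: "a c \<in> EE l" if "c < ?n" for c using IA(3) that by (auto simp: colassm_def)
  have ainj: "inj_on a {..<?n}" and aind: "\<not> affine_dependent (a ` {..<?n})" using IA(3) by (auto simp: colassm_def)
  have azE: "az \<in> EE l" unfolding az_def by (rule aE[OF col_lt]) simp
  have BzL: "Bz \<in> av L ` {..<Suc ?n}" unfolding vsL Bz_def by (rule image_eqI[of _ _ 0]) auto
  have LE: "(av L ` {..<Suc ?n} :: (real,'w) vec set) \<subseteq> EE ?n" using caL by (auto simp: colassm_def)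
  have sh: "measure lebesgue (convex hull (av L ` {..<Suc ?n} \<union> (\<lambda>k. x0 + ev k) ` {?n..<?D}))
      = measure lebesgue (convex hull (av L ` {..<Suc ?n} \<union> (\<lambda>k. Bz + ev k) ` {?n..<?D}))"
    by (rule shear) (use LE x0 BzL in auto)
  define af where "af k = a (col ?n (z + int k))" for k
  have vsA: "a ` {..<?n} = af ` {..<?n}"
  proof -
    have "af ` {..<?n} = a ` ((\<lambda>k. col ?n (z + int k)) ` {..<?n})" by (auto simp: af_def image_image)
    also have "(\<lambda>k. col ?n (z + int k)) ` {..<?n} = {..<?n}"
    proof
      show "(\<lambda>k. col ?n (z + int k)) ` {..<?n} \<subseteq> {..<?n}" using col_lt[of ?n] by auto
      show "{..<?n} \<subseteq> (\<lambda>k. col ?n (z + int k)) ` {..<?n}"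
      proof
        fix c assume c: "c \<in> {..<?n}"
        have "col ?n (z + int (tau ?n z c)) = c" using c by (simp add: col_tau)
        moreover have "tau ?n z c \<in> {..<?n}" using tau_lt[of ?n z c] by simp
        ultimately show "c \<in> (\<lambda>k. col ?n (z + int k)) ` {..<?n}" by (rule image_eqI[OF sym])
      qed
    qed
    finally show ?thesis by simp
  qed
  have afinj: "inj_on af {..<?n}"
  proof
    fix k k' assume k: "k \<in> {..<?n}" "k' \<in> {..<?n}" "af k = af k'"
    then have "col ?n (z + int k) = col ?n (z + int k')"
      using ainj col_lt[of ?n] by (auto simp: af_def inj_on_def)
    then show "k = k'" using col_eq_iff k by auto
  qed
  have af0: "af 0 = az" by (simp add: af_def az_def)
  define wf where "wf k = af k - az" for k
  have wfE: "wf k \<in> EE l" if "k < ?n" for k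
    unfolding wf_def af_def using aE[OF col_lt[of ?n]] azE by (auto simp: EE_def)
  have wfinj: "inj_on wf {1..l}"
    using afinj by (auto simp: inj_on_def wf_def)
  have indep: "\<not> dependent (wf ` {1..l})"
  proof -
    have azin: "az \<in> a ` {..<?n}" unfolding az_def using col_lt[of ?n z] by auto
    have "\<not> dependent ((\<lambda>x. - az + x) ` (a ` {..<?n} - {az}))"
      using affine_dependent_iff_dependent2[OF azin] aind by simp
    moreover have "a ` {..<?n} - {az} = af ` {1..l}"
    proof -
      have "af ` {..<?n} = insert (af 0) (af ` {1..l})"
        by (auto simp: image_iff) (metis One_nat_def Suc_leI atLeastAtMost_iff gr0I less_Suc_eq_le)
      moreover have "af 0 \<notin> af ` {1..l}"
      proof
        assume "af 0 \<in> af ` {1..l}"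
        then obtain k where k: "k \<in> {1..l}" "af 0 = af k" by auto
        then have "0 = k" using inj_onD[OF afinj k(2)] by auto
        then show False using k by simp
      qed
      ultimately show ?thesis using vsA af0 by auto
    qed
    moreover have "(\<lambda>x. - az + x) ` (af ` {1..l}) = wf ` {1..l}" by (auto simp: wf_def image_image)
    ultimately show ?thesis by simp
  qed
  have "\<exists>g::(real,'w) vec \<Rightarrow> real. linear g \<and> (\<forall>w\<in>wf ` {1..l}. g w = real (the_inv_into {1..l} wf w))"
    by (rule linear_independent_extend[OF indep])
  then obtain g :: "(real,'w) vec \<Rightarrow> real" where g: "linear g" "\<forall>w\<in>wf ` {1..l}. g w = real (the_inv_into {1..l} wf w)"
    by blast
  have gwf: "g (wf k) = real k" if "k \<in> {1..l}" for k
    using g(2) that the_inv_into_f_f[OF wfinj that] by auto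
  have gp: "g (x + y) = g x + g y" "g (c *\<^sub>R x) = c * g x" "g 0 = 0" for x y c
    using linear_g_props[OF g(1)] by auto
  define G where "G y = y + ((real ?n * ?q - 1) * crd l y + ?q * g (prj l y)) *\<^sub>R ev l" for y
  have linG: "linear G"
    unfolding linear_iff
  proof (intro conjI allI)
    fix x y show "G (x + y) = G x + G y"
      unfolding G_def crd_add prj_add gp by (simp add: algebra_simps scaleR_add_left)
  next
    fix c :: real and x show "G (c *\<^sub>R x) = c *\<^sub>R G x"
      unfolding G_def crd_scale prj_scale gp by (simp add: scaleR_add_right algebra_simps)
  qed
  have G_wf: "G (wf k) = wf k + (real k * ?q) *\<^sub>R ev l" if "k \<in> {1..l}" for k
  proof -
    have "k < ?n" using that by auto
    then have "wf k \<in> EE l" by (rule wfE)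
    then have "crd l (wf k) = 0" "prj l (wf k) = wf k" by (rule crd_EE, rule prj_EE)
    then show ?thesis using gwf[OF that] by (simp add: G_def mult.commute)
  qed
  have G_evl: "G (ev l) = (real ?n * ?q) *\<^sub>R ev l"
    unfolding G_def crd_ev_gen[OF lD] prj_ev_ge[OF order_refl] gp(3) by (simp add: algebra_simps)
  have G_evk: "G (ev k) = ev k" if "l < k" for k
    unfolding G_def crd_ev_gen[OF lD] prj_ev_ge[OF less_imp_le[OF that]] gp(3) using that by simp
  have BBk: "BB l ?q a (z + int k) = Bz + wf k + (real k * ?q) *\<^sub>R ev l" for k
    by (simp add: BB_def Bz_def wf_def af_def az_def algebra_simps)
  have BBn: "BB l ?q a (z + int ?n) = Bz + (real ?n * ?q) *\<^sub>R ev l"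
  proof -
    have "col ?n (z + int ?n) = col ?n z" by (rule col_add_n)
    then show ?thesis by (simp add: BB_def Bz_def algebra_simps)
  qed
  define F where "F y = Bz + G (y - az)" for y
  have F_af: "F (af k) = BB l ?q a (z + int k)" if "k < ?n" for k
  proof (cases "k = 0")
    case True
    have "G 0 = 0" using linG by (simp add: linear_0)
    then show ?thesis using True af0 BBk[of 0] by (simp add: F_def wf_def)
  next
    case False
    then have "k \<in> {1..l}" using that by auto
    then show ?thesis using G_wf BBk[of k] by (simp add: F_def wf_def[symmetric] add.assoc)
  qed
  have img: "F ` (a ` {..<?n} \<union> (\<lambda>k. az + ev k) ` {l..<?D})
      = av L ` {..<Suc ?n} \<union> (\<lambda>k. Bz + ev k) ` {?n..<?D}"
  proof -
    have i1: "F ` (a ` {..<?n}) = (\<lambda>k. BB l ?q a (z + int k)) ` {..<?n}"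
      unfolding vsA image_image by (rule image_cong) (simp_all add: F_af)
    have "{l..<?D} = insert l {?n..<?D}" using lD by auto
    then have i2: "F ` ((\<lambda>k. az + ev k) ` {l..<?D}) = insert (BB l ?q a (z + int ?n)) ((\<lambda>k. Bz + ev k) ` {?n..<?D})"
      using G_evl G_evk BBn by (auto simp: F_def image_image)
    have "{..?n} = insert ?n {..<?n}" by auto
    then have "av L ` {..<Suc ?n} = insert (BB l ?q a (z + int ?n)) ((\<lambda>k. BB l ?q a (z + int k)) ` {..<?n})"
      unfolding vsL by simp
    then show ?thesis unfolding image_Un i1 i2 by auto
  qed
  have det: "det (matrix G) = real ?n * ?q"
  proof -
    obtain i0 :: 'w where i0: "ix i0 = l" using ix_surj[OF lD] by blast
    define c where "c j = (real ?n * ?q - 1) * crd l (axis j 1 :: (real,'w) vec) + ?q * g (prj l (axis j 1))" for j :: 'w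
    have ent: "matrix G $ i $ j = (if i = j then 1 else 0) + (if ix i = l then c j else 0)" for i j
      by (simp add: matrix_def G_def c_def ev_comp axis_def)
    have cz: "c j = 0" if "l < ix j" for j
    proof -
      have "crd l (axis j 1 :: (real,'w) vec) = 0" using crd_eq[OF i0] i0 that by (auto simp: axis_def)
      moreover have "prj l (axis j 1 :: (real,'w) vec) = 0" using that by (auto simp: prj_def axis_def vec_eq_iff)
      ultimately show ?thesis using gp(3) by (simp add: c_def)
    qed
    have c0: "c i0 = real ?n * ?q - 1"
    proof -
      have "crd l (axis i0 1 :: (real,'w) vec) = 1" using crd_eq[OF i0] by (simp add: axis_def)
      moreover have "prj l (axis i0 1 :: (real,'w) vec) = 0" using i0 by (auto simp: prj_def axis_def vec_eq_iff)
      ultimately show ?thesis using gp(3) by (simp add: c_def)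
    qed
    have "det (matrix G) = (\<Prod>i\<in>UNIV. matrix G $ i $ i)"
    proof (rule det_lowerdiagonal)
      fix i j :: 'w assume "i < j"
      then show "matrix G $ i $ j = 0" using cz[of j] ix_lt[of i j] by (auto simp: ent)
    qed
    also have "\<dots> = (\<Prod>i\<in>{i0}. matrix G $ i $ i)"
      by (rule prod.mono_neutral_right) (auto simp: ent i0[symmetric] ix_inj)
    also have "\<dots> = real ?n * ?q" using c0 i0 by (simp add: ent)
    finally show ?thesis .
  qed
  have fin: "finite (a ` {..<?n} \<union> (\<lambda>k. az + ev k) ` {l..<?D})" by simp
  have "measure lebesgue (convex hull (av L ` {..<Suc ?n} \<union> (\<lambda>k. Bz + ev k) ` {?n..<?D}))
      = measure lebesgue (convex hull ((\<lambda>y. Bz + G (y - az)) ` (a ` {..<?n} \<union> (\<lambda>k. az + ev k) ` {l..<?D})))"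
    using img by (simp add: F_def[abs_def])
  also have "\<dots> = \<bar>det (matrix G)\<bar> * measure lebesgue (convex hull (a ` {..<?n} \<union> (\<lambda>k. az + ev k) ` {l..<?D}))"
    by (rule meas_affine[OF linG fin])
  also have "measure lebesgue (convex hull (a ` {..<?n} \<union> (\<lambda>k. az + ev k) ` {l..<?D}))
      = fact l * (\<Prod>i=1..l. \<bar>p i\<bar>) / fact ?D"
    using IH A(1) col_lt[of ?n z] unfolding a_def az_def by auto
  finally have "measure lebesgue (convex hull (av L ` {..<Suc ?n} \<union> (\<lambda>k. Bz + ev k) ` {?n..<?D}))
     = \<bar>real ?n * ?q\<bar> * (fact l * (\<Prod>i=1..l. \<bar>p i\<bar>) / fact ?D)" using det by simp
  also have "\<dots> = fact ?n * (\<Prod>i=1..?n. \<bar>p i\<bar>) / fact ?D"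
  proof -
    have e1: "(\<Prod>i=1..?n. \<bar>p i\<bar>) = \<bar>?q\<bar> * (\<Prod>i=1..l. \<bar>p i\<bar>)" by (simp add: prod.nat_ivl_Suc')
    have e2: "(fact ?n :: real) = real ?n * fact l" by simp
    have e3: "\<bar>real ?n * ?q\<bar> = real ?n * \<bar>?q\<bar>" by (simp add: abs_mult)
    show ?thesis unfolding e1 e2 e3 by simp
  qed
  finally show ?thesis using sh by simp
qed

lemma thick_all:
  fixes p :: "nat \<Rightarrow> real"
  shows "m \<le> CARD('w::{finite,wellorder}) \<Longrightarrow> \<forall>i\<in>{1..m}. p i \<noteq> 0 \<Longrightarrow>
    \<forall>V\<in>tv p m. \<forall>x0\<in>(av V ` {..<Suc m} :: (real,'w) vec set).
       measure lebesgue (convex hull (av V ` {..<Suc m} \<union> (\<lambda>k. x0 + ev k) ` {m..<CARD('w)}))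
         = fact m * (\<Prod>i=1..m. \<bar>p i\<bar>) / fact CARD('w)"
proof (induction m)
  case 0
  have "(av [[]] ` {..<Suc 0} :: (real,'w) vec set) = {av [[]] 0}" by auto
  then show ?case using thick_base[where 'w='w] by simp
next
  case (Suc l)
  have LV: "LV p l TYPE('w)" by (rule LV_all) (use Suc.prems in auto)
  have IH: "\<forall>V\<in>tv p l. \<forall>x0\<in>(av V ` {..<Suc l} :: (real,'w) vec set).
       measure lebesgue (convex hull (av V ` {..<Suc l} \<union> (\<lambda>k. x0 + ev k) ` {l..<CARD('w)}))
         = fact l * (\<Prod>i=1..l. \<bar>p i\<bar>) / fact CARD('w)" using Suc by auto
  show ?case
  proof (intro ballI)
    fix V x0 assume V: "V \<in> tv p (Suc l)" and x0: "x0 \<in> (av V ` {..<Suc (Suc l)} :: (real,'w) vec set)"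
    show "measure lebesgue (convex hull (av V ` {..<Suc (Suc l)} \<union> (\<lambda>k. x0 + ev k) ` {Suc l..<CARD('w)}))
         = fact (Suc l) * (\<Prod>i=1..Suc l. \<bar>p i\<bar>) / fact CARD('w)"
      by (rule thick_step[OF LV _ _ IH V x0]) (use Suc.prems in auto)
  qed
qed

lemma meas_tess:
  fixes p :: "nat \<Rightarrow> real"
  assumes p: "\<forall>i\<in>{1..CARD('d::{finite,linorder})}. p i \<noteq> 0"
    and K: "K \<in> (tess p :: (real,'d) vec set set)"
  shows "measure lebesgue K = (\<Prod>i=1..CARD('d). \<bar>p i\<bar>)"
proof -
  let ?d = "CARD('d)"
  obtain V where V: "V \<in> tv p ?d" "K = convex hull (av V ` {..<Suc ?d} :: (real,'d) vec set)"
    using K tess_char[OF p] by auto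
  have cpt: "compact K" using V(2) by (simp add: finite_imp_compact_convex_hull)
  have "phi ` K = convex hull (phi ` (av V ` {..<Suc ?d} :: (real,'d) vec set))"
    using V(2) convex_hull_linear_image[OF linear_phi] by simp
  also have "phi ` (av V ` {..<Suc ?d} :: (real,'d) vec set) = (av V ` {..<Suc ?d} :: (real,'d wo) vec set)"
    by (auto simp: image_image av_def phi_emb)
  finally have e: "phi ` K = convex hull (av V ` {..<Suc ?d} :: (real,'d wo) vec set)" .
  have cw: "CARD('d wo) = ?d" by (rule card_wo)
  have "\<forall>V\<in>tv p ?d. \<forall>x0\<in>(av V ` {..<Suc ?d} :: (real,'d wo) vec set).
       measure lebesgue (convex hull (av V ` {..<Suc ?d} \<union> (\<lambda>k. x0 + ev k) ` {?d..<CARD('d wo)}))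
         = fact ?d * (\<Prod>i=1..?d. \<bar>p i\<bar>) / fact CARD('d wo)"
    by (rule thick_all) (use p cw in auto)
  then have "measure lebesgue (convex hull (av V ` {..<Suc ?d} :: (real,'d wo) vec set))
         = fact ?d * (\<Prod>i=1..?d. \<bar>p i\<bar>) / fact ?d"
    using V(1) cw by auto
  then have "measure lebesgue (phi ` K) = (\<Prod>i=1..?d. \<bar>p i\<bar>)" using e by simp
  then show ?thesis using measure_phi[OF cpt] by simp
qed

theorem theorem1:
  fixes p :: "nat \<Rightarrow> real"
  assumes "\<forall>i\<in>{1..CARD('d::{finite,linorder})}. p i \<noteq> 0"
  shows "simplicial_tessellation (tess p :: (real ^ ('d::{finite,linorder})) set set)
    \<and> (\<forall>K \<in> (tess p :: (real ^ ('d::{finite,linorder})) set set).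
          measure lebesgue K = (\<Prod>i=1..CARD('d). \<bar>p i\<bar>))
    \<and> (\<forall>F. F \<subseteq> (tess p :: (real ^ ('d::{finite,linorder})) set set) \<and> finite F \<and> connected (\<Union>F)
          \<longrightarrow> face_to_face_mesh F)"
  using geo[OF assms] meas_tess[OF assms] by blast


end
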